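(* Let $\mu_0$ satisfy $\mathfrak m_4:=\int|v|^4\mu_0(dv)<\infty$, $|\hat\mu_0(\xi)|=o(|\xi|^{-p})$ as $|\xi|\to\infty$ for some $p>0$, $\int v\mu_0(dv)=0$, $\int v_iv_j\mu_0(dv)=\sigma_i^2\delta_{ij}$ with $\sigma_1^2+\sigma_2^2+\sigma_3^2=3$. Let $q=1/(2\lceil2/p\rceil)$ and let $\lambda>0$ be such that $|\hat\mu_0(\xi)|\le(\lambda^2/(\lambda^2+|\xi|^2))^q$ for all $\xi$. Define $$\mathrm W:=\sum_{j=1}^\nu\pi_{j,\nu}^4,\quad R:=\tfrac12(\mathfrak m_4\mathrm W)^{-1/4},\quad\Psi(\rho):=\prod_{j=1}^\nu\Big(\frac{\lambda^2}{\lambda^2+\rho^2\pi_{j,\nu}^2}\Big)^q,\quad\hat{\mathcal N}(\rho;u):=\prod_{j=1}^\nu\hat\mu_0\big(\rho\,\pi_{j,\nu}\psi_{j,\nu}(u)\big).$$ Then, outside a $P_t$-null set, for every $\rho\in[0,R]$, $$\sup_{u\in S^2}|\hat{\mathcal N}(\rho;u)|\le\Psi(\rho),\qquad\sup_{u\in S^2}|\hat{\mathcal M}(\rho u)|\le\Psi(\rho).$$ Moreover there are non-random polynomials $\wp_1,\wp_2$ of degrees $2$ and $4$, with positive coefficients depending only on $\mu_0$, such that outside a $P_t$-null set, for every $\rho\in[0,R]$ and $k=1,2$, $$\sup_{u\in S^2}\Big|\frac{\partial^k}{\partial\rho^k}\hat{\mathcal N}(\rho;u)\Big|\le\wp_k(\rho)\Psi(\rho),\qquad\sup_{u\in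 S^2}\Big|\frac{\partial^k}{\partial\rho^k}\hat{\mathcal M}(\rho u)\Big|\le\wp_k(\rho)\Psi(\rho).$$ The bounds for $\hat{\mathcal N}$ hold for any choice of $\mathrm B$.
   Context: $\hat\mu(\xi)=\int e^{i\xi\cdot v}\mu(dv)$. $\mathrm B:S^2\to\mathbb{SO}(3)$ is a measurable map with $\mathrm B(u)e_3=u$, and $\psi_{j,n}(u):=\mathrm B(u)\mathrm O_{j,n}e_3$ with $\mathrm O_{j,n}:=\mathrm O^*_{j,n}(\tau_n,(\phi_1,\dots,\phi_{n-1}),(\vartheta_1,\dots,\vartheta_{n-1}))$. Trees: McKean binary trees (finite rooted trees, each node with zero or two children distinguished left/right, leaves numbered left to right); $\mathbb T(n)$ those with $n$ leaves, $\mathfrak t_1$ the one-node tree, $\mathfrak t_n^l,\mathfrak t_n^r$ subtrees at left/right child of root with $n_l,n_r$ leaves; germination $\mathfrak t_{n,k}$ attaches two leaves to the $k$-th leaf. Kernel $b$ on $[-1,1]$ with $b(x)=b(\sqrt{1-x^2})|x|/\sqrt{1-x^2}=b(-x)$, $\int_0^1b=1$; $\beta(d\varphi)=\frac12b(\cos\varphi)\sin\varphi d\varphi$. Under $P_t$ independent: $\nu$, $P_t[\nu=n]=e^{-t}(1-e^{-t})^{n-1}$; Markov chain $\tau_n\in\mathbb T(n)$, $\tau_1=\mathfrak t_1$, $P_t[\tau_{n+1}=\mathfrak t_{n,k}|\tau_n=\mathfrak t_n]=1/n$; i.i.d. $\phi_n\sim\beta$; i.i.d. $\vartheta_n$ uniform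 on $(0,2\pi)$. $\pi^*_{1,1}\equiv1$, $\pi^*_{j,n}(\mathfrak t_n,\boldsymbol\varphi)=\pi^*_{j,n_l}(\mathfrak t_n^l,\boldsymbol\varphi^l)\cos\varphi_{n-1}$ ($j\le n_l$), $=\pi^*_{j-n_l,n_r}(\mathfrak t_n^r,\boldsymbol\varphi^r)\sin\varphi_{n-1}$ ($j>n_l$), where $\boldsymbol\varphi^l=(\varphi_1,\dots,\varphi_{n_l-1})$, $\boldsymbol\varphi^r=(\varphi_{n_l},\dots,\varphi_{n-2})$; $\pi_{j,n}=\pi^*_{j,n}(\tau_n,(\phi_1,\dots,\phi_{n-1}))$. $\mathrm O^*_{1,1}=\mathrm{Id}$, $\mathrm O^*_{j,n}=\mathrm M^l(\varphi_{n-1},\theta_{n-1})\mathrm O^*_{j,n_l}(\mathfrak t_n^l,\boldsymbol\varphi^l,\boldsymbol\theta^l)$ ($j\le n_l$), $=\mathrm M^r(\varphi_{n-1},\theta_{n-1})\mathrm O^*_{j-n_l,n_r}(\mathfrak t_n^r,\boldsymbol\varphi^r,\boldsymbol\theta^r)$ ($j>n_l$), with $\mathrm M^l(\varphi,\theta)=\begin{pmatrix}-\cos\theta\cos\varphi&\sin\theta&\cos\theta\sin\varphi\\-\sin\theta\cos\varphi&-\cos\theta&\sin\theta\sin\varphi\\ \sin\varphi&0&\cos\varphi\end{pmatrix}$, $\mathrm M^r(\varphi,\theta)=\begin{pmatrix}\sin\theta&\cos\theta\sin\varphi&-\cos\theta\cos\varphi\\-\cos\theta&\sin\theta\sin\varphi&-\sin\theta\cos\varphi\\0&\cos\varphi&\sin\varphi\end{pmatrix}$.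 $\hat{\mathcal M}(\xi)$, for $\xi\neq0$, $\rho=|\xi|$, $u=\xi/|\xi|$, is the conditional expectation of $\hat{\mathcal N}(\rho;u)$ given $\nu,(\tau_n),(\phi_n)$, i.e. $\hat\mu_0(\xi)$ if $\nu=1$ and $\int_{(0,2\pi)^{\nu-1}}\prod_{j}\hat\mu_0(\rho\pi_{j,\nu}\mathrm B(u)\mathrm O^*_{j,\nu}(\tau_\nu,\boldsymbol\phi,\boldsymbol\theta)e_3)u_{(0,2\pi)}^{\otimes(\nu-1)}(d\boldsymbol\theta)$ if $\nu\ge2$; it does not depend on $\mathrm B$. *)

theory Defs
  imports "HOL-Probability.Probability" "HOL-Computational_Algebra.Polynomial"
    "HOL-Library.Landau_Symbols"
begin

definition char3 :: "(real^3) measure \<Rightarrow> real^3 \<Rightarrow> complex" where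
  "char3 \<mu> \<xi> = integral\<^sup>L \<mu> (\<lambda>v. cis (\<xi> \<bullet> v))"

definition e3 :: "real^3" where "e3 = axis 3 1"

datatype mtree = Leaf | Node mtree mtree

fun leaves :: "mtree \<Rightarrow> nat" where
  "leaves Leaf = 1"
| "leaves (Node l r) = leaves l + leaves r"

text \<open>Germination: attach two leaves to the k-th leaf (leaves numbered from 1, left to right).\<close>
fun germ :: "mtree \<Rightarrow> nat \<Rightarrow> mtree" where
  "germ Leaf k = (if k = 1 then Node Leaf Leaf else Leaf)"
| "germ (Node l r) k =
     (if k \<le> leaves l then Node (germ l k) r else Node l (germ r (k - leaves l)))"

text \<open>Angle vectors (phi_1,...,phi_{n-1}) are functions nat => real indexed from 1.\<close>
fun pi_star :: "mtree \<Rightarrow> (nat \<Rightarrow> real) \<Rightarrow> nat \<Rightarrow> real" where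
  "pi_star Leaf \<phi> j = 1"
| "pi_star (Node l r) \<phi> j =
     (let nl = leaves l; n = leaves l + leaves r in
      if j \<le> nl then pi_star l \<phi> j * cos (\<phi> (n - 1))
      else pi_star r (\<lambda>i. \<phi> (i + nl - 1)) (j - nl) * sin (\<phi> (n - 1)))"

definition Ml :: "real \<Rightarrow> real \<Rightarrow> real^3^3" where
  "Ml \<phi> \<theta> = vector [vector [- cos \<theta> * cos \<phi>, sin \<theta>, cos \<theta> * sin \<phi>],
                     vector [- sin \<theta> * cos \<phi>, - cos \<theta>, sin \<theta> * sin \<phi>],
                     vector [sin \<phi>, 0, cos \<phi>]]"

definition Mr :: "real \<Rightarrow> real \<Rightarrow> real^3^3" where
  "Mr \<phi> \<theta> = vector [vector [sin \<theta>, cos \<theta> * sin \<phi>, - cos \<theta> * cos \<phi>],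
                     vector [- cos \<theta>, sin \<theta> * sin \<phi>, - sin \<theta> * cos \<phi>],
                     vector [0, cos \<phi>, sin \<phi>]]"

fun O_star :: "mtree \<Rightarrow> (nat \<Rightarrow> real) \<Rightarrow> (nat \<Rightarrow> real) \<Rightarrow> nat \<Rightarrow> real^3^3" where
  "O_star Leaf \<phi> \<theta> j = mat 1"
| "O_star (Node l r) \<phi> \<theta> j =
     (let nl = leaves l; n = leaves l + leaves r in
      if j \<le> nl then Ml (\<phi> (n - 1)) (\<theta> (n - 1)) ** O_star l \<phi> \<theta> j
      else Mr (\<phi> (n - 1)) (\<theta> (n - 1)) **
             O_star r (\<lambda>i. \<phi> (i + nl - 1)) (\<lambda>i. \<theta> (i + nl - 1)) (j - nl))"

text \<open>Sample points: (nu, K, phi, theta). The tree chain is tau_1 = Leaf,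
  tau_{n+1} = germ tau_n K_n with K_n uniform on {1..n}, independent; since germination
  at distinct leaves gives distinct trees, this is exactly the Markov chain with
  P[tau_{n+1} = germ t k | tau_n = t] = 1/n.\<close>

type_synonym sample = "nat \<times> (nat \<Rightarrow> nat) \<times> (nat \<Rightarrow> real) \<times> (nat \<Rightarrow> real)"

fun tau :: "(nat \<Rightarrow> nat) \<Rightarrow> nat \<Rightarrow> mtree" where
  "tau K 0 = Leaf"
| "tau K (Suc n) = (if n = 0 then Leaf else germ (tau K n) (K n))"

definition Kdist :: "nat \<Rightarrow> nat measure" where
  "Kdist n = measure_pmf (pmf_of_set {1..max 1 n})"

definition beta_meas :: "(real \<Rightarrow> real) \<Rightarrow> real measure" where
  "beta_meas b = density lborel
     (\<lambda>\<phi>. ennreal (indicator {0..pi} \<phi> * (b (cos \<phi>) * sin \<phi> / 2)))"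

definition unif_theta :: "real measure" where
  "unif_theta = uniform_measure lborel {0<..<2 * pi}"

text \<open>nu = 1 + Geometric(exp(-t)), i.e. P[nu = n] = e^{-t} (1 - e^{-t})^{n-1}.\<close>
definition Pt :: "(real \<Rightarrow> real) \<Rightarrow> real \<Rightarrow> sample measure" where
  "Pt b t = measure_pmf (map_pmf Suc (geometric_pmf (exp (- t)))) \<Otimes>\<^sub>M
            (PiM UNIV Kdist \<Otimes>\<^sub>M
             (PiM UNIV (\<lambda>_. beta_meas b) \<Otimes>\<^sub>M PiM UNIV (\<lambda>_. unif_theta)))"

definition nu :: "sample \<Rightarrow> nat" where "nu \<omega> = fst \<omega>"
definition Kseq :: "sample \<Rightarrow> nat \<Rightarrow> nat" where "Kseq \<omega> = fst (snd \<omega>)"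
definition phis :: "sample \<Rightarrow> nat \<Rightarrow> real" where "phis \<omega> = fst (snd (snd \<omega>))"
definition thetas :: "sample \<Rightarrow> nat \<Rightarrow> real" where "thetas \<omega> = snd (snd (snd \<omega>))"

definition tree_nu :: "sample \<Rightarrow> mtree" where "tree_nu \<omega> = tau (Kseq \<omega>) (nu \<omega>)"

definition pi_rv :: "sample \<Rightarrow> nat \<Rightarrow> real" where
  "pi_rv \<omega> j = pi_star (tree_nu \<omega>) (phis \<omega>) j"

definition kernel_b :: "(real \<Rightarrow> real) \<Rightarrow> bool" where
  "kernel_b b \<longleftrightarrow> b \<in> borel_measurable borel \<and> (\<forall>x. 0 \<le> b x) \<and>
     (\<forall>x. -1 < x \<and> x < 1 \<longrightarrow>
         b x = b (sqrt (1 - x\<^sup>2)) * \<bar>x\<bar> / sqrt (1 - x\<^sup>2) \<and> b x = b (- x)) \<and>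
     (\<integral>\<^sup>+ x\<in>{0..1}. ennreal (b x) \<partial>lborel) = 1"

definition admissible_B :: "(real^3 \<Rightarrow> real^3^3) \<Rightarrow> bool" where
  "admissible_B B \<longleftrightarrow> B \<in> borel_measurable (restrict_space borel (sphere 0 1)) \<and>
     (\<forall>u\<in>sphere 0 1. orthogonal_matrix (B u) \<and> det (B u) = 1 \<and> B u *v e3 = u)"

definition W_rv :: "sample \<Rightarrow> real" where
  "W_rv \<omega> = (\<Sum>j=1..nu \<omega>. (pi_rv \<omega> j) ^ 4)"

definition moment4 :: "(real^3) measure \<Rightarrow> real" where
  "moment4 \<mu> = integral\<^sup>L \<mu> (\<lambda>v. norm v ^ 4)"

definition R_rv :: "(real^3) measure \<Rightarrow> sample \<Rightarrow> real" where
  "R_rv \<mu> \<omega> = (moment4 \<mu> * W_rv \<omega>) powr (-1/4) / 2"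

definition Psi :: "real \<Rightarrow> real \<Rightarrow> sample \<Rightarrow> real \<Rightarrow> real" where
  "Psi lam q \<omega> \<rho> = (\<Prod>j=1..nu \<omega>. (lam\<^sup>2 / (lam\<^sup>2 + \<rho>\<^sup>2 * (pi_rv \<omega> j)\<^sup>2)) powr q)"

definition psi_rv :: "(real^3 \<Rightarrow> real^3^3) \<Rightarrow> sample \<Rightarrow> nat \<Rightarrow> real^3 \<Rightarrow> real^3" where
  "psi_rv B \<omega> j u = B u *v (O_star (tree_nu \<omega>) (phis \<omega>) (thetas \<omega>) j *v e3)"

definition Nhat :: "(real^3) measure \<Rightarrow> (real^3 \<Rightarrow> real^3^3) \<Rightarrow> sample \<Rightarrow> real \<Rightarrow> real^3 \<Rightarrow> complex" where
  "Nhat \<mu> B \<omega> \<rho> u = (\<Prod>j=1..nu \<omega>. char3 \<mu> ((\<rho> * pi_rv \<omega> j) *\<^sub>R psi_rv B \<omega> j u))"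

text \<open>hat M(rho u): conditional expectation of hat N(rho;u) given nu, tau, phi,
  i.e. the integral over theta_1..theta_{nu-1} i.i.d. uniform on (0,2pi).\<close>
definition Mhat :: "(real^3) measure \<Rightarrow> (real^3 \<Rightarrow> real^3^3) \<Rightarrow> sample \<Rightarrow> real \<Rightarrow> real^3 \<Rightarrow> complex" where
  "Mhat \<mu> B \<omega> \<rho> u =
     (if nu \<omega> = 1 then char3 \<mu> (\<rho> *\<^sub>R u)
      else integral\<^sup>L (PiM {1..nu \<omega> - 1} (\<lambda>_. unif_theta))
        (\<lambda>\<theta>. \<Prod>j=1..nu \<omega>. char3 \<mu> ((\<rho> * pi_rv \<omega> j) *\<^sub>R
                 (B u *v (O_star (tree_nu \<omega>) (phis \<omega>) \<theta> j *v e3)))))"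

definition dr :: "(real \<Rightarrow> complex) \<Rightarrow> real \<Rightarrow> complex" where
  "dr f = (\<lambda>x. vector_derivative f (at x))"

definition bounds_at :: "(real \<Rightarrow> complex) \<Rightarrow> (real \<Rightarrow> real) \<Rightarrow> real poly \<Rightarrow> real poly \<Rightarrow> real \<Rightarrow> bool" where
  "bounds_at f \<Psi> p1 p2 \<rho> \<longleftrightarrow>
     norm (f \<rho>) \<le> \<Psi> \<rho> \<and>
     (f has_vector_derivative dr f \<rho>) (at \<rho>) \<and>
     norm (dr f \<rho>) \<le> poly p1 \<rho> * \<Psi> \<rho> \<and>
     (dr f has_vector_derivative dr (dr f) \<rho>) (at \<rho>) \<and>
     norm (dr (dr f) \<rho>) \<le> poly p2 \<rho> * \<Psi> \<rho>"

end

theory Submission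
  imports Defs
begin

lemma reflect_nn: fixes f :: "real \<Rightarrow> ennreal" assumes [measurable]: "f \<in> borel_measurable borel"
  shows "(\<integral>\<^sup>+ x. f (- x) \<partial>lborel) = (\<integral>\<^sup>+ x. f x \<partial>lborel)"
proof -
  have "(\<integral>\<^sup>+ x. f x \<partial>lborel) = (\<integral>\<^sup>+ x. f x \<partial>distr lborel borel uminus)"
    by (simp add: lborel_distr_uminus)
  also have "\<dots> = (\<integral>\<^sup>+ x. f (- x) \<partial>lborel)"
    by (subst nn_integral_distr) auto
  finally show ?thesis ..
qed

lemma ennreal_half: "0 \<le> (y::real) \<Longrightarrow> ennreal (y/2) = ennreal y / 2"
  by (metis divide_ennreal ennreal_numeral zero_less_numeral)

lemma beta_prob:
  assumes kb: "kernel_b b" shows "prob_space (beta_meas b)"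
proof
  have bm[measurable]: "b \<in> borel_measurable borel" and bnn: "\<And>x. 0 \<le> b x"
    and sym: "\<And>x. -1 < x \<Longrightarrow> x < 1 \<Longrightarrow> b x = b (- x)"
    and int1: "(\<integral>\<^sup>+ x\<in>{0..1}. ennreal (b x) \<partial>lborel) = 1"
    using kb unfolding kernel_b_def by auto
  have "emeasure (beta_meas b) (space (beta_meas b)) =
     (\<integral>\<^sup>+ \<phi>. ennreal (indicator {0..pi} \<phi> * (b (cos \<phi>) * sin \<phi> / 2)) \<partial>lborel)"
    unfolding beta_meas_def by (subst emeasure_density) auto
  also have "\<dots> = (\<integral>\<^sup>+ \<phi>. ennreal ((\<lambda>x. b (- x) / 2) ((\<lambda>\<phi>. - cos \<phi>) \<phi>) * sin \<phi> * indicator {0..pi} \<phi>) \<partial>lborel)"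
    by (rule nn_integral_cong) (simp add: field_simps)
  also have "\<dots> = (\<integral>\<^sup>+ x. ennreal (b (- x) / 2 * indicator {(\<lambda>\<phi>. - cos \<phi>) 0..(\<lambda>\<phi>. - cos \<phi>) pi} x) \<partial>lborel)"
    by (rule nn_integral_substitution[symmetric])
       (auto intro!: derivative_eq_intros continuous_intros sin_ge_zero simp: set_borel_measurable_def)
  also have "\<dots> = (\<integral>\<^sup>+ x. ennreal (b x * indicator {0..1} x) / 2 + ennreal (b (- x) * indicator {0..1} (- x)) / 2 \<partial>lborel)"
  proof (rule nn_integral_cong_AE)
    have "AE x in lborel. x \<noteq> 1 \<and> x \<noteq> -1 \<and> x \<noteq> 0"
      using AE_lborel_singleton[of 1] AE_lborel_singleton[of "-1"] AE_lborel_singleton[of 0] by eventually_elim auto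
    then show "AE x in lborel. ennreal (b (- x) / 2 * indicator {- cos 0..- cos pi} x) =
          ennreal (b x * indicator {0..1} x) / 2 + ennreal (b (- x) * indicator {0..1} (- x)) / 2"
    proof eventually_elim
      case (elim x)
      show ?case
      proof (cases "0 < x \<and> x < 1")
        case True thus ?thesis using sym[of x] bnn[of x] by (simp add: indicator_def ennreal_half)
      next
        case False
        then consider "x < 0 \<and> -1 < x" | "x < -1" | "x > 1" using elim by linarith
        thus ?thesis using bnn[of "-x"] by cases (auto simp add: indicator_def ennreal_half)
      qed
    qed
  qed
  also have "\<dots> = (\<integral>\<^sup>+ x. ennreal (b x * indicator {0..1} x) \<partial>lborel) / 2 + (\<integral>\<^sup>+ x. ennreal (b (- x) * indicator {0..1} (- x)) \<partial>lborel) / 2"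
    by (subst nn_integral_add) (auto simp: nn_integral_divide)
  also have "(\<integral>\<^sup>+ x. ennreal (b (- x) * indicator {0..1} (- x)) \<partial>lborel) = (\<integral>\<^sup>+ x. ennreal (b x * indicator {0..1} x) \<partial>lborel)"
    by (rule reflect_nn[where f="\<lambda>x. ennreal (b x * indicator {0..1} x)"]) auto
  also have "(\<integral>\<^sup>+ x. ennreal (b x * indicator {0..1} x) \<partial>lborel) = 1"
    using int1 by (metis (no_types, lifting) nn_integral_cong indicator_mult_ennreal mult.commute)
  also have "(1::ennreal) / 2 + 1 / 2 = ennreal (1/2) + ennreal (1/2)"
    using ennreal_half[of 1] by simp
  also have "\<dots> = ennreal (1/2 + 1/2)" by (rule ennreal_plus[symmetric]) auto
  finally show "emeasure (beta_meas b) (space (beta_meas b)) = 1"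
    by simp
qed

lemma theta_prob: "prob_space unif_theta"
  unfolding unif_theta_def by (rule prob_space_uniform_measure) auto

definition goodK :: "(nat \<Rightarrow> nat) \<Rightarrow> bool" where
  "goodK K \<longleftrightarrow> (\<forall>m. 1 \<le> m \<longrightarrow> K m \<in> {1..m})"

lemma goodK_sets: "{K \<in> space (PiM UNIV Kdist). goodK K} \<in> sets (PiM UNIV Kdist)"
  unfolding goodK_def
proof (rule sets.sets_Collect_countable_All)
  fix m
  have "(\<lambda>K. K m) \<in> measurable (PiM UNIV Kdist) (Kdist m)" by (rule measurable_component_singleton) simp
  hence "(\<lambda>K. K m) -` {1..m} \<inter> space (PiM UNIV Kdist) \<in> sets (PiM UNIV Kdist)"
    by (rule measurable_sets) (simp add: Kdist_def)
  thus "{K \<in> space (PiM UNIV Kdist). 1 \<le> m \<longrightarrow> K m \<in> {1..m}} \<in> sets (PiM UNIV Kdist)"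
    by (cases "1 \<le> m") (auto simp: vimage_def Int_def conj_commute)
qed

lemma AE_goodK: "AE K in PiM UNIV Kdist. goodK K"
proof -
  interpret product_prob_space Kdist UNIV
    by (rule product_prob_spaceI) (simp add: Kdist_def prob_space_measure_pmf)
  have "AE K in PiM UNIV Kdist. K m \<in> {1..m}" if "1 \<le> m" for m
  proof -
    have "AE x in Kdist m. x \<in> {1..m}"
      unfolding Kdist_def using that by (subst AE_measure_pmf_iff) (auto simp: max_def)
    hence "AE x in distr (PiM UNIV Kdist) (Kdist m) (\<lambda>K. K m). x \<in> {1..m}"
      by (subst PiM_component) auto
    from AE_distrD[OF _ this] show ?thesis by simp
  qed
  then show ?thesis unfolding goodK_def by (subst AE_all_countable) (auto intro: AE_impI)
qed

lemma AE_goodK_Pt: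
  assumes kb: "kernel_b b" shows "AE \<omega> in Pt b t. goodK (Kseq \<omega>)"
proof -
  let ?C = "measure_pmf (map_pmf Suc (geometric_pmf (exp (- t))))"
  let ?K = "PiM UNIV Kdist"
  let ?R = "PiM UNIV (\<lambda>_. beta_meas b) \<Otimes>\<^sub>M PiM UNIV (\<lambda>_. unif_theta)"
  have pR: "prob_space ?R"
    by (intro prob_space_pair prob_space_PiM beta_prob[OF kb] theta_prob)
  have pK: "prob_space ?K"
    by (intro prob_space_PiM) (simp add: Kdist_def prob_space_measure_pmf)
  have pKR: "prob_space (?K \<Otimes>\<^sub>M ?R)" by (intro prob_space_pair pK pR)
  interpret KR: pair_sigma_finite ?K ?R
    unfolding pair_sigma_finite_def using pK pR by (blast intro: prob_space_imp_sigma_finite)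
  interpret CKR: pair_sigma_finite ?C "?K \<Otimes>\<^sub>M ?R"
    unfolding pair_sigma_finite_def using pKR prob_space_measure_pmf by (blast intro: prob_space_imp_sigma_finite)
  have s1: "{x \<in> space (?K \<Otimes>\<^sub>M ?R). goodK (fst x)} \<in> sets (?K \<Otimes>\<^sub>M ?R)"
  proof -
    have "{x \<in> space (?K \<Otimes>\<^sub>M ?R). goodK (fst x)} = fst -` {K \<in> space ?K. goodK K} \<inter> space (?K \<Otimes>\<^sub>M ?R)"
      by (auto simp: space_pair_measure)
    also have "\<dots> \<in> sets (?K \<Otimes>\<^sub>M ?R)"
      by (rule measurable_sets[OF measurable_fst goodK_sets])
    finally show ?thesis .
  qed
  have a1: "AE x in ?K \<Otimes>\<^sub>M ?R. goodK (fst x)"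
    by (rule KR.AE_pair_measure[OF s1]) (use AE_goodK in \<open>auto elim!: AE_mp\<close>)
  have s2: "{x \<in> space (?C \<Otimes>\<^sub>M (?K \<Otimes>\<^sub>M ?R)). goodK (fst (snd x))} \<in> sets (?C \<Otimes>\<^sub>M (?K \<Otimes>\<^sub>M ?R))"
  proof -
    have "{x \<in> space (?C \<Otimes>\<^sub>M (?K \<Otimes>\<^sub>M ?R)). goodK (fst (snd x))} =
        snd -` {x \<in> space (?K \<Otimes>\<^sub>M ?R). goodK (fst x)} \<inter> space (?C \<Otimes>\<^sub>M (?K \<Otimes>\<^sub>M ?R))"
      by (auto simp: space_pair_measure)
    also have "\<dots> \<in> sets (?C \<Otimes>\<^sub>M (?K \<Otimes>\<^sub>M ?R))"
      by (rule measurable_sets[OF measurable_snd s1])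
    finally show ?thesis .
  qed
  have "AE x in ?C \<Otimes>\<^sub>M (?K \<Otimes>\<^sub>M ?R). goodK (fst (snd x))"
    by (rule CKR.AE_pair_measure[OF s2]) (use a1 in auto)
  thus ?thesis unfolding Pt_def Kseq_def .
qed

lemma leaves_pos: "leaves t \<ge> 1" by (induction t) auto

lemma leaves_germ: "1 \<le> k \<Longrightarrow> k \<le> leaves t \<Longrightarrow> leaves (germ t k) = leaves t + 1"
  by (induction t arbitrary: k) auto

lemma leaves_tau: assumes "\<forall>m. 1 \<le> m \<longrightarrow> K m \<in> {1..m}" "n \<ge> 1" shows "leaves (tau K n) = n"
  using assms(2)
proof (induction n)
  case 0 then show ?case by simp
next
  case (Suc n)
  show ?case
  proof (cases "n = 0")
    case True then show ?thesis by simp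
  next
    case False
    then have "leaves (tau K n) = n" using Suc by auto
    moreover have "K n \<in> {1..n}" using assms(1) False by auto
    ultimately show ?thesis using False by (simp add: leaves_germ)
  qed
qed

lemma pi_star_sq: "(\<Sum>j=1..leaves t. (pi_star t \<phi> j)\<^sup>2) = 1"
proof (induction t arbitrary: \<phi>)
  case Leaf then show ?case by simp
next
  case (Node l r)
  define nl where "nl = leaves l"
  define nr where "nr = leaves r"
  define c where "c = \<phi> (nl + nr - 1)"
  have nl1: "nl \<ge> 1" unfolding nl_def by (rule leaves_pos)
  have split: "{1..nl + nr} = {1..nl} \<union> {nl+1..nl+nr}" by auto
  have A: "(\<Sum>j=1..nl. (pi_star (Node l r) \<phi> j)\<^sup>2) = (cos c)\<^sup>2"
  proof -
    have "(\<Sum>j=1..nl. (pi_star (Node l r) \<phi> j)\<^sup>2) = (\<Sum>j=1..nl. (pi_star l \<phi> j)\<^sup>2 * (cos c)\<^sup>2)"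
      by (rule sum.cong) (auto simp: nl_def nr_def c_def Let_def power_mult_distrib)
    also have "\<dots> = (cos c)\<^sup>2" using Node.IH(1)[of \<phi>] by (simp add: sum_distrib_right[symmetric] nl_def)
    finally show ?thesis .
  qed
  have B: "(\<Sum>j=nl+1..nl+nr. (pi_star (Node l r) \<phi> j)\<^sup>2) = (sin c)\<^sup>2"
  proof -
    have "(\<Sum>j=nl+1..nl+nr. (pi_star (Node l r) \<phi> j)\<^sup>2) = (\<Sum>i=1..nr. (pi_star (Node l r) \<phi> (i + nl))\<^sup>2)"
      by (rule sum.reindex_bij_witness[where j="\<lambda>j. j - nl" and i="\<lambda>i. i + nl"]) auto
    also have "\<dots> = (\<Sum>i=1..nr. (pi_star r (\<lambda>i. \<phi> (i + nl - 1)) i)\<^sup>2 * (sin c)\<^sup>2)"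
      by (rule sum.cong) (auto simp: nl_def nr_def c_def Let_def power_mult_distrib)
    also have "\<dots> = (sin c)\<^sup>2" using Node.IH(2)[of "\<lambda>i. \<phi> (i + nl - 1)"] by (simp add: sum_distrib_right[symmetric] nr_def)
    finally show ?thesis .
  qed
  have "(\<Sum>j=1..leaves (Node l r). (pi_star (Node l r) \<phi> j)\<^sup>2)
      = (\<Sum>j\<in>{1..nl} \<union> {nl+1..nl+nr}. (pi_star (Node l r) \<phi> j)\<^sup>2)"
    using split by (simp add: nl_def nr_def)
  also have "\<dots> = (\<Sum>j=1..nl. (pi_star (Node l r) \<phi> j)\<^sup>2) + (\<Sum>j=nl+1..nl+nr. (pi_star (Node l r) \<phi> j)\<^sup>2)"
    by (rule sum.union_disjoint) auto
  also have "\<dots> = (cos c)\<^sup>2 + (sin c)\<^sup>2" using A B by simp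
  finally show ?case by simp
qed

lemma orth_Ml: "orthogonal_matrix (Ml a b)"
  unfolding orthogonal_matrix_def Ml_def
  apply (simp add: vec_eq_iff forall_3 matrix_matrix_mult_def transpose_def sum_3 mat_def vector_3)
  apply (insert sin_cos_squared_add[of a] sin_cos_squared_add[of b])
  apply (intro conjI; algebra)
  done

lemma orth_Mr: "orthogonal_matrix (Mr a b)"
  unfolding orthogonal_matrix_def Mr_def
  apply (simp add: vec_eq_iff forall_3 matrix_matrix_mult_def transpose_def sum_3 mat_def vector_3)
  apply (insert sin_cos_squared_add[of a] sin_cos_squared_add[of b])
  apply (intro conjI; algebra)
  done

lemma orth_O: "orthogonal_matrix (O_star t \<phi> \<theta> j)"
  by (induction t arbitrary: \<phi> \<theta> j) (auto simp: Let_def orthogonal_matrix_mul orth_Ml orth_Mr orthogonal_matrix_id)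

lemma hvd_iff:
  fixes f :: "real \<Rightarrow> 'b::real_normed_vector"
  shows "(f has_vector_derivative D) (at x) \<longleftrightarrow> ((\<lambda>h. (f (x + h) - f x) /\<^sub>R h) \<longlongrightarrow> D) (at 0)"
proof -
  have bl: "bounded_linear (\<lambda>h. h *\<^sub>R D)" by (rule bounded_linear_scaleR_left)
  have ev: "\<forall>\<^sub>F h in at (0::real). norm (f (x + h) - f x - h *\<^sub>R D) / norm h = norm ((f (x + h) - f x) /\<^sub>R h - D)"
  proof (rule eventually_mono[OF eventually_at_filter[THEN iffD2]])
    show "\<forall>\<^sub>F h in nhds 0. h \<noteq> (0::real) \<longrightarrow> h \<in> UNIV \<longrightarrow> h \<noteq> 0" by simp
  next
    fix h :: real assume "h \<noteq> 0"
    then have "f (x + h) - f x - h *\<^sub>R D = h *\<^sub>R ((f (x + h) - f x) /\<^sub>R h - D)"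
      by (simp add: algebra_simps)
    then show "norm (f (x + h) - f x - h *\<^sub>R D) / norm h = norm ((f (x + h) - f x) /\<^sub>R h - D)"
      using \<open>h \<noteq> 0\<close> by simp
  qed
  have "(f has_vector_derivative D) (at x) \<longleftrightarrow> ((\<lambda>h. norm (f (x + h) - f x - h *\<^sub>R D) / norm h) \<longlongrightarrow> 0) (at 0)"
    unfolding has_vector_derivative_def has_derivative_at using bl by simp
  also have "\<dots> \<longleftrightarrow> ((\<lambda>h. norm ((f (x + h) - f x) /\<^sub>R h - D)) \<longlongrightarrow> 0) (at 0)"
    by (rule tendsto_cong[OF ev])
  also have "\<dots> \<longleftrightarrow> ((\<lambda>h. (f (x + h) - f x) /\<^sub>R h) \<longlongrightarrow> D) (at 0)"
    by (simp add: tendsto_norm_zero_iff LIM_zero_iff)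
  finally show ?thesis .
qed

lemma vd_bound:
  fixes f :: "real \<Rightarrow> 'b::real_normed_vector"
  assumes "\<And>s. (f has_vector_derivative f' s) (at s)" "\<And>s. norm (f' s) \<le> B"
  shows "norm (f x - f y) \<le> B * \<bar>x - y\<bar>"
proof -
  have "norm (f x - f y) \<le> B * norm (x - y)"
  proof (rule differentiable_bound[of UNIV f "\<lambda>s h. h *\<^sub>R f' s"])
    fix s :: real
    show "(f has_derivative (\<lambda>h. h *\<^sub>R f' s)) (at s within UNIV)"
      using assms(1)[of s] by (simp add: has_vector_derivative_def)
    show "onorm (\<lambda>h. h *\<^sub>R f' s) \<le> B"
      by (rule onorm_le) (use assms(2)[of s] in \<open>auto intro: mult_left_mono simp: mult.commute[of B]\<close>)
  qed auto
  then show ?thesis by simp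
qed

lemma deriv_integral:
  fixes f f' :: "real \<Rightarrow> 'a \<Rightarrow> 'b::{banach, second_countable_topology}"
  assumes fm: "\<And>s. f s \<in> borel_measurable M"
    and fi: "\<And>s. integrable M (f s)"
    and d: "\<And>s x. x \<in> space M \<Longrightarrow> ((\<lambda>s. f s x) has_vector_derivative f' s x) (at s)"
    and g: "integrable M g" and bd: "\<And>s x. x \<in> space M \<Longrightarrow> norm (f' s x) \<le> g x"
  shows "f' r \<in> borel_measurable M" "integrable M (f' r)"
    "((\<lambda>s. integral\<^sup>L M (f s)) has_vector_derivative integral\<^sup>L M (f' r)) (at r)"
proof -
  define Q where "Q h x = (f (r + h) x - f r x) /\<^sub>R h" for h x
  have Qlim: "((\<lambda>h. Q h x) \<longlongrightarrow> f' r x) (at 0)" if "x \<in> space M" for x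
    using d[OF that, of r] unfolding hvd_iff Q_def .
  have Qm: "Q h \<in> borel_measurable M" for h
    unfolding Q_def using fm by measurable
  have Qb: "norm (Q h x) \<le> g x" if "x \<in> space M" for h x
  proof (cases "h = 0")
    case True then show ?thesis using bd[OF that, of 0] by (simp add: Q_def) (meson norm_ge_zero order_trans)
  next
    case False
    have "norm (f (r + h) x - f r x) \<le> g x * \<bar>(r + h) - r\<bar>"
      by (rule vd_bound[where f="\<lambda>s. f s x"]) (use d[OF that] bd[OF that] in auto)
    then show ?thesis using False by (simp add: Q_def divide_simps)
  qed
  have seq: "(\<lambda>i. Q (X i) x) \<longlonglongrightarrow> f' r x" if "x \<in> space M" "\<forall>i. X i \<noteq> 0" "X \<longlonglongrightarrow> 0" for X x
    using Qlim[OF that(1)] that(2,3) unfolding tendsto_at_iff_sequentially by (auto simp: comp_def)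
  have X0: "\<forall>i. inverse (real (Suc i)) \<noteq> 0" "(\<lambda>i. inverse (real (Suc i))) \<longlonglongrightarrow> 0"
    using LIMSEQ_inverse_real_of_nat by auto
  show fm': "f' r \<in> borel_measurable M"
    by (rule borel_measurable_LIMSEQ_metric[OF Qm seq[OF _ X0]])
  have gm: "g \<in> borel_measurable M" using g by auto
  show "integrable M (f' r)"
    by (rule Bochner_Integration.integrable_bound[OF g fm']) (use bd in \<open>auto intro!: AE_I2 intro: order_trans[OF _ abs_ge_self]\<close>)
  have "((\<lambda>h. (integral\<^sup>L M (f (r + h)) - integral\<^sup>L M (f r)) /\<^sub>R h) \<longlongrightarrow> integral\<^sup>L M (f' r)) (at 0)"
    unfolding tendsto_at_iff_sequentially comp_def
  proof (intro allI impI)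
    fix X :: "nat \<Rightarrow> real" assume X: "\<forall>i. X i \<in> UNIV - {0}" "X \<longlonglongrightarrow> 0"
    have "(\<lambda>i. integral\<^sup>L M (Q (X i))) \<longlonglongrightarrow> integral\<^sup>L M (f' r)"
      by (rule integral_dominated_convergence[OF fm' Qm g])
         (use seq X Qb in \<open>auto intro!: AE_I2\<close>)
    moreover have "integral\<^sup>L M (Q h) = (integral\<^sup>L M (f (r + h)) - integral\<^sup>L M (f r)) /\<^sub>R h" for h
      unfolding Q_def using fi by (simp add: integral_diff)
    ultimately show "(\<lambda>i. (integral\<^sup>L M (f (r + X i)) - integral\<^sup>L M (f r)) /\<^sub>R X i) \<longlonglongrightarrow> integral\<^sup>L M (f' r)"
      by simp
  qed
  then show "((\<lambda>s. integral\<^sup>L M (f s)) has_vector_derivative integral\<^sup>L M (f' r)) (at r)"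
    unfolding hvd_iff .
qed

definition k0 :: "real^3 \<Rightarrow> real \<Rightarrow> real^3 \<Rightarrow> complex" where
  "k0 a r v = cis (r * (a \<bullet> v))"
definition k1 :: "real^3 \<Rightarrow> real \<Rightarrow> real^3 \<Rightarrow> complex" where
  "k1 a r v = (a \<bullet> v) *\<^sub>R (\<i> * cis (r * (a \<bullet> v)))"
definition k2 :: "real^3 \<Rightarrow> real \<Rightarrow> real^3 \<Rightarrow> complex" where
  "k2 a r v = (a \<bullet> v) *\<^sub>R (\<i> * ((a \<bullet> v) *\<^sub>R (\<i> * cis (r * (a \<bullet> v)))))"

lemma k0_deriv: "((\<lambda>s. k0 a s v) has_vector_derivative k1 a r v) (at r)"
  unfolding k0_def k1_def has_vector_derivative_def
  by (auto intro!: derivative_eq_intros simp: algebra_simps)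

lemma k1_deriv: "((\<lambda>s. k1 a s v) has_vector_derivative k2 a r v) (at r)"
  unfolding k1_def k2_def has_vector_derivative_def
  apply (rule has_derivative_eq_rhs)
   apply (rule bounded_linear.has_derivative[OF bounded_linear_scaleR_right])
   apply (rule bounded_linear.has_derivative[OF bounded_linear_mult_right])
   apply (auto intro!: derivative_eq_intros simp: algebra_simps)
  done

lemma norm_k0: "norm (k0 a r v) = 1" by (simp add: k0_def)
lemma norm_k1: "norm (k1 a r v) = \<bar>a \<bullet> v\<bar>" by (simp add: k1_def norm_mult)
lemma norm_k2: "norm (k2 a r v) = (a \<bullet> v)\<^sup>2" by (simp add: k2_def norm_mult power2_eq_square)

lemma norm_cis_minus_1: "norm (cis x - 1) \<le> \<bar>x\<bar>"
proof -
  have "norm (cis x - cis 0) \<le> 1 * \<bar>x - 0\<bar>"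
    by (rule vd_bound[where f=cis and f'="\<lambda>s. \<i> * cis s"])
       (auto simp: has_vector_derivative_def norm_mult intro!: derivative_eq_intros)
  then show ?thesis by simp
qed

lemma int_norm_le:
  fixes f :: "'a \<Rightarrow> 'b::{banach,second_countable_topology}"
  assumes "integrable M f" "integrable M g" "\<And>x. x \<in> space M \<Longrightarrow> norm (f x) \<le> g x"
  shows "norm (integral\<^sup>L M f) \<le> integral\<^sup>L M g"
  by (smt (verit, best) assms integrable_norm integral_mono integral_norm_bound)

locale cf =
  fixes \<mu> :: "(real^3) measure"
  assumes prob: "prob_space \<mu>" and sets: "sets \<mu> = sets borel"
    and m4: "integrable \<mu> (\<lambda>v. norm v ^ 4)"
    and mean: "\<forall>i. integral\<^sup>L \<mu> (\<lambda>v. v $ i) = 0"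
begin

interpretation P: prob_space \<mu> by (rule prob)

lemma meas: "f \<in> borel_measurable \<mu> \<longleftrightarrow> f \<in> borel_measurable borel"
  using measurable_cong_sets[OF sets refl] by blast

lemma meas_cont: "continuous_on UNIV f \<Longrightarrow> f \<in> borel_measurable \<mu>"
  unfolding meas by (rule borel_measurable_continuous_onI)

lemma int_n1: "integrable \<mu> (\<lambda>v. norm v)"
proof (rule Bochner_Integration.integrable_bound[where f="\<lambda>v. 1 + norm v ^ 4"])
  show "integrable \<mu> (\<lambda>v. 1 + norm v ^ 4)" using m4 by simp
  show "(\<lambda>v. norm v) \<in> borel_measurable \<mu>" by (simp add: meas)
  show "AE x in \<mu>. norm (norm x) \<le> norm (1 + norm x ^ 4)"
  proof (rule AE_I2)
    fix x :: "real^3"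
    have "norm x \<le> 1 + norm x ^ 4"
    proof (cases "norm x \<le> 1")
      case True then show ?thesis by (smt (verit) zero_le_power norm_ge_zero)
    next
      case False then have "norm x \<le> norm x ^ 4" by (intro self_le_power) auto
      then show ?thesis by simp
    qed
    then show "norm (norm x) \<le> norm (1 + norm x ^ 4)" by simp
  qed
qed

lemma int_n2: "integrable \<mu> (\<lambda>v. (norm v)\<^sup>2)"
proof (rule Bochner_Integration.integrable_bound[where f="\<lambda>v. 1 + norm v ^ 4"])
  show "integrable \<mu> (\<lambda>v. 1 + norm v ^ 4)" using m4 by simp
  show "(\<lambda>v. (norm v)\<^sup>2) \<in> borel_measurable \<mu>" by (simp add: meas)
  show "AE x in \<mu>. norm ((norm x)\<^sup>2) \<le> norm (1 + norm x ^ 4)"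
  proof (rule AE_I2)
    fix x :: "real^3"
    have "(norm x)\<^sup>2 \<le> 1 + norm x ^ 4"
    proof (cases "norm x \<le> 1")
      case True then have "(norm x)\<^sup>2 \<le> 1" by (simp add: power_le_one)
      then show ?thesis by (smt (verit) zero_le_power norm_ge_zero)
    next
      case False then have "(norm x)\<^sup>2 \<le> (norm x) ^ 4"
        by (intro power_increasing) auto
      then show ?thesis by simp
    qed
    then show "norm ((norm x)\<^sup>2) \<le> norm (1 + norm x ^ 4)" by simp
  qed
qed

definition m1 where "m1 = integral\<^sup>L \<mu> (\<lambda>v. norm v)"
definition m2 where "m2 = integral\<^sup>L \<mu> (\<lambda>v. (norm v)\<^sup>2)"

lemma m2_nonneg: "0 \<le> m2" unfolding m2_def by simp
lemma m1_nonneg: "0 \<le> m1" unfolding m1_def by simp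

lemma k0_meas: "k0 a r \<in> borel_measurable \<mu>" unfolding k0_def by (intro meas_cont continuous_intros)
lemma k1_meas: "k1 a r \<in> borel_measurable \<mu>" unfolding k1_def by (intro meas_cont continuous_intros)

lemma k0_int: "integrable \<mu> (k0 a r)"
  by (rule P.integrable_const_bound[where B=1]) (auto simp: norm_k0 k0_meas)

lemma k1_int: "integrable \<mu> (k1 a r)"
  by (rule Bochner_Integration.integrable_bound[where f="\<lambda>v. norm a * norm v"])
     (auto intro!: AE_I2 simp: int_n1 k1_meas norm_k1 Cauchy_Schwarz_ineq2)

lemma dot_bd: "\<bar>a \<bullet> v\<bar> \<le> norm a * norm v" by (rule Cauchy_Schwarz_ineq2)

lemma dot_sq_bd: "(a \<bullet> v)\<^sup>2 \<le> (norm a)\<^sup>2 * (norm v)\<^sup>2"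
proof -
  have "(a \<bullet> v)\<^sup>2 = \<bar>a \<bullet> v\<bar>\<^sup>2" by simp
  also have "\<dots> \<le> (norm a * norm v)\<^sup>2" by (rule power_mono[OF dot_bd]) simp
  finally show ?thesis by (simp add: power_mult_distrib)
qed

lemma c_deriv:
  shows "((\<lambda>s. integral\<^sup>L \<mu> (k0 a s)) has_vector_derivative integral\<^sup>L \<mu> (k1 a r)) (at r)"
    and "((\<lambda>s. integral\<^sup>L \<mu> (k1 a s)) has_vector_derivative integral\<^sup>L \<mu> (k2 a r)) (at r)"
proof -
  show "((\<lambda>s. integral\<^sup>L \<mu> (k0 a s)) has_vector_derivative integral\<^sup>L \<mu> (k1 a r)) (at r)"
    by (rule deriv_integral(3)[where g="\<lambda>v. norm a * norm v"])
       (auto simp: k0_meas k0_int k0_deriv int_n1 norm_k1 dot_bd)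
  show "((\<lambda>s. integral\<^sup>L \<mu> (k1 a s)) has_vector_derivative integral\<^sup>L \<mu> (k2 a r)) (at r)"
    by (rule deriv_integral(3)[where g="\<lambda>v. (norm a)\<^sup>2 * (norm v)\<^sup>2"])
       (auto simp: k1_meas k1_int k1_deriv int_n2 norm_k2 dot_sq_bd)
qed

lemma char_eq: "char3 \<mu> (r *\<^sub>R a) = integral\<^sup>L \<mu> (k0 a r)"
  unfolding char3_def k0_def by simp

lemma mean_dot: "integral\<^sup>L \<mu> (\<lambda>v. a \<bullet> v) = 0"
proof -
  have ic: "integrable \<mu> (\<lambda>v. v $ i)" for i
    by (rule Bochner_Integration.integrable_bound[OF int_n1]) (auto intro!: AE_I2 simp: meas component_le_norm_cart)
  have "integral\<^sup>L \<mu> (\<lambda>v. a \<bullet> v) = integral\<^sup>L \<mu> (\<lambda>v. \<Sum>i\<in>UNIV. a $ i * v $ i)"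
    by (simp add: inner_vec_def)
  also have "\<dots> = (\<Sum>i\<in>UNIV. a $ i * integral\<^sup>L \<mu> (\<lambda>v. v $ i))"
    using ic by (simp add: integral_sum)
  also have "\<dots> = 0" using mean by simp
  finally show ?thesis .
qed

lemma c1_bd1: "norm (integral\<^sup>L \<mu> (k1 a r)) \<le> norm a * m1"
proof -
  have "norm (integral\<^sup>L \<mu> (k1 a r)) \<le> integral\<^sup>L \<mu> (\<lambda>v. norm a * norm v)"
    by (rule int_norm_le) (auto simp: k1_int int_n1 norm_k1 dot_bd)
  then show ?thesis by (simp add: m1_def)
qed

lemma c2_bd: "norm (integral\<^sup>L \<mu> (k2 a r)) \<le> (norm a)\<^sup>2 * m2"
proof -
  have k2m: "k2 a r \<in> borel_measurable \<mu>" unfolding k2_def by (intro meas_cont continuous_intros)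
  have "norm (integral\<^sup>L \<mu> (k2 a r)) \<le> integral\<^sup>L \<mu> (\<lambda>v. (norm a)\<^sup>2 * (norm v)\<^sup>2)"
    by (rule int_norm_le)
       (auto simp: int_n2 norm_k2 dot_sq_bd intro!: Bochner_Integration.integrable_bound[OF _ k2m, where f="\<lambda>v. (norm a)\<^sup>2 * (norm v)\<^sup>2"] AE_I2)
  then show ?thesis by (simp add: m2_def)
qed

lemma c1_bd2: "norm (integral\<^sup>L \<mu> (k1 a r)) \<le> \<bar>r\<bar> * (norm a)\<^sup>2 * m2"
proof -
  define h where "h v = (a \<bullet> v) *\<^sub>R (\<i> * (cis (r * (a \<bullet> v)) - 1))" for v
  have hm: "h \<in> borel_measurable \<mu>" unfolding h_def by (intro meas_cont continuous_intros)
  have hb: "norm (h v) \<le> \<bar>r\<bar> * (norm a)\<^sup>2 * (norm v)\<^sup>2" for v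
  proof -
    have "norm (h v) = \<bar>a \<bullet> v\<bar> * norm (cis (r * (a \<bullet> v)) - 1)" by (simp add: h_def norm_mult)
    also have "\<dots> \<le> \<bar>a \<bullet> v\<bar> * \<bar>r * (a \<bullet> v)\<bar>" by (rule mult_left_mono[OF norm_cis_minus_1]) simp
    also have "\<dots> = \<bar>r\<bar> * (a \<bullet> v)\<^sup>2" by (simp add: abs_mult power2_eq_square)
    also have "\<dots> \<le> \<bar>r\<bar> * ((norm a)\<^sup>2 * (norm v)\<^sup>2)" by (rule mult_left_mono[OF dot_sq_bd]) simp
    finally show ?thesis by simp
  qed
  have hi: "integrable \<mu> h"
    by (rule Bochner_Integration.integrable_bound[OF _ hm, where f="\<lambda>v. \<bar>r\<bar> * (norm a)\<^sup>2 * (norm v)\<^sup>2"])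
       (auto intro!: AE_I2 simp: int_n2 intro: order_trans[OF hb])
  have di: "integrable \<mu> (\<lambda>v. (a \<bullet> v) *\<^sub>R \<i>)"
    by (rule Bochner_Integration.integrable_bound[OF int_n1[THEN integrable_mult_right[of "norm a"]]])
       (auto intro!: AE_I2 simp: meas dot_bd)
  have "k1 a r = (\<lambda>v. h v + (a \<bullet> v) *\<^sub>R \<i>)"
    by (auto simp: k1_def h_def algebra_simps fun_eq_iff)
  then have "integral\<^sup>L \<mu> (k1 a r) = integral\<^sup>L \<mu> h + integral\<^sup>L \<mu> (\<lambda>v. (a \<bullet> v) *\<^sub>R \<i>)"
    by (simp only: Bochner_Integration.integral_add[OF hi di])
  also have "integral\<^sup>L \<mu> (\<lambda>v. (a \<bullet> v) *\<^sub>R \<i>) = integral\<^sup>L \<mu> (\<lambda>v. a \<bullet> v) *\<^sub>R \<i>"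
    by (rule integral_scaleR_left) (rule Bochner_Integration.integrable_bound[OF int_n1[THEN integrable_mult_right[of "norm a"]]], auto intro!: AE_I2 simp: meas dot_bd)
  also have "\<dots> = 0" by (simp add: mean_dot)
  finally have eq: "integral\<^sup>L \<mu> (k1 a r) = integral\<^sup>L \<mu> h" by simp
  have "norm (integral\<^sup>L \<mu> h) \<le> integral\<^sup>L \<mu> (\<lambda>v. \<bar>r\<bar> * (norm a)\<^sup>2 * (norm v)\<^sup>2)"
    by (rule int_norm_le) (auto simp: hi int_n2 hb)
  then show ?thesis using eq by (simp add: m2_def)
qed

end

lemma nm_le: fixes x y :: complex
  assumes "norm x \<le> a" "norm y \<le> b" shows "norm (x * y) \<le> a * b"
  using assms by (simp add: norm_mult mult_mono' )

lemma comb1: fixes a a1 F P1 :: complex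
  assumes "0 \<le> gi" "0 \<le> Ai" "0 \<le> G" "0 \<le> S" "norm a \<le> gi" "norm a1 \<le> Ai * gi"
    "norm F \<le> G" "norm P1 \<le> S * G"
  shows "norm (a * P1 + a1 * F) \<le> (Ai + S) * (gi * G)"
proof -
  have "norm (a * P1 + a1 * F) \<le> norm (a * P1) + norm (a1 * F)" by (rule norm_triangle_ineq)
  also have "\<dots> \<le> gi * (S * G) + (Ai * gi) * G"
    by (intro add_mono nm_le assms)
  also have "\<dots> = (Ai + S) * (gi * G)" by (simp add: algebra_simps)
  finally show ?thesis .
qed

lemma comb2: fixes a a1 a2 F P1 P2 :: complex
  assumes "0 \<le> gi" "0 \<le> Ai" "0 \<le> Bi" "0 \<le> G" "0 \<le> S" "0 \<le> T" "norm a \<le> gi" "norm a1 \<le> Ai * gi"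
    "norm a2 \<le> Bi * gi" "norm F \<le> G" "norm P1 \<le> S * G" "norm P2 \<le> (T + S\<^sup>2) * G"
  shows "norm (a * P2 + a1 * P1 + (a1 * P1 + a2 * F)) \<le> ((Bi + T) + (Ai + S)\<^sup>2) * (gi * G)"
proof -
  have "norm (a * P2 + a1 * P1 + (a1 * P1 + a2 * F)) \<le> norm (a * P2) + norm (a1 * P1) + (norm (a1 * P1) + norm (a2 * F))"
    by (smt (verit) norm_triangle_ineq)
  also have "\<dots> \<le> gi * ((T + S\<^sup>2) * G) + (Ai * gi) * (S * G) + ((Ai * gi) * (S * G) + (Bi * gi) * G)"
    by (intro add_mono nm_le assms)
  also have "\<dots> \<le> ((Bi + T) + (Ai + S)\<^sup>2) * (gi * G)"
  proof -
    have "0 \<le> Ai\<^sup>2 * (gi * G)" using assms by simp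
    then show ?thesis by (simp add: algebra_simps power2_eq_square)
  qed
  finally show ?thesis .
qed

lemma prod_deriv:
  fixes f f1 f2 :: "'i \<Rightarrow> real \<Rightarrow> complex"
  assumes "finite J"
    and d1: "\<And>j r. j \<in> J \<Longrightarrow> (f j has_vector_derivative f1 j r) (at r)"
    and d2: "\<And>j r. j \<in> J \<Longrightarrow> (f1 j has_vector_derivative f2 j r) (at r)"
  shows "\<exists>P1 P2. (\<forall>r. ((\<lambda>s. \<Prod>j\<in>J. f j s) has_vector_derivative P1 r) (at r)) \<and>
     (\<forall>r. (P1 has_vector_derivative P2 r) (at r)) \<and>
     (\<forall>r g A B. (\<forall>j\<in>J. 0 \<le> g j \<and> 0 \<le> A j \<and> 0 \<le> B j \<and> norm (f j r) \<le> g j \<and>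
          norm (f1 j r) \<le> A j * g j \<and> norm (f2 j r) \<le> B j * g j) \<longrightarrow>
        norm (\<Prod>j\<in>J. f j r) \<le> (\<Prod>j\<in>J. g j) \<and>
        norm (P1 r) \<le> (\<Sum>j\<in>J. A j) * (\<Prod>j\<in>J. g j) \<and>
        norm (P2 r) \<le> ((\<Sum>j\<in>J. B j) + (\<Sum>j\<in>J. A j)\<^sup>2) * (\<Prod>j\<in>J. g j))"
  using assms
proof (induction J rule: finite_induct)
  case empty
  show ?case by (rule exI[of _ "\<lambda>_. 0"], rule exI[of _ "\<lambda>_. 0"]) auto
next
  case (insert i J)
  from insert.IH[OF insert.prems(1,2)] obtain P1 P2 where
    D1: "\<forall>r. ((\<lambda>s. \<Prod>j\<in>J. f j s) has_vector_derivative P1 r) (at r)" and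
    D2: "\<forall>r. (P1 has_vector_derivative P2 r) (at r)" and
    Bd: "\<forall>r g A B. (\<forall>j\<in>J. 0 \<le> g j \<and> 0 \<le> A j \<and> 0 \<le> B j \<and> norm (f j r) \<le> g j \<and>
          norm (f1 j r) \<le> A j * g j \<and> norm (f2 j r) \<le> B j * g j) \<longrightarrow>
        norm (\<Prod>j\<in>J. f j r) \<le> (\<Prod>j\<in>J. g j) \<and>
        norm (P1 r) \<le> (\<Sum>j\<in>J. A j) * (\<Prod>j\<in>J. g j) \<and>
        norm (P2 r) \<le> ((\<Sum>j\<in>J. B j) + (\<Sum>j\<in>J. A j)\<^sup>2) * (\<Prod>j\<in>J. g j)"
    by blast
  define F where "F s = (\<Prod>j\<in>J. f j s)" for s
  define Q1 where "Q1 r = f i r * P1 r + f1 i r * F r" for r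
  define Q2 where "Q2 r = f i r * P2 r + f1 i r * P1 r + (f1 i r * P1 r + f2 i r * F r)" for r
  have prodeq: "(\<lambda>s. \<Prod>j\<in>insert i J. f j s) = (\<lambda>s. f i s * F s)"
    using insert.hyps by (simp add: F_def)
  have dF: "(F has_vector_derivative P1 r) (at r)" for r using D1 unfolding F_def[abs_def] by blast
  have E1: "((\<lambda>s. f i s * F s) has_vector_derivative Q1 r) (at r)" for r
    unfolding Q1_def by (rule has_vector_derivative_mult[OF insert.prems(1)[of i] dF]) auto
  have E2: "(Q1 has_vector_derivative Q2 r) (at r)" for r
    unfolding Q1_def[abs_def] Q2_def
    by (intro has_vector_derivative_add has_vector_derivative_mult insert.prems dF D2[rule_format]) auto
  have A1: "\<forall>r. ((\<lambda>s. \<Prod>j\<in>insert i J. f j s) has_vector_derivative Q1 r) (at r)"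
    unfolding prodeq using E1 by blast
  have A2: "\<forall>r. (Q1 has_vector_derivative Q2 r) (at r)" using E2 by blast
  have A3: "\<forall>r g A B. (\<forall>j\<in>insert i J. 0 \<le> g j \<and> 0 \<le> A j \<and> 0 \<le> B j \<and> norm (f j r) \<le> g j \<and>
          norm (f1 j r) \<le> A j * g j \<and> norm (f2 j r) \<le> B j * g j) \<longrightarrow>
        norm (\<Prod>j\<in>insert i J. f j r) \<le> (\<Prod>j\<in>insert i J. g j) \<and>
        norm (Q1 r) \<le> (\<Sum>j\<in>insert i J. A j) * (\<Prod>j\<in>insert i J. g j) \<and>
        norm (Q2 r) \<le> ((\<Sum>j\<in>insert i J. B j) + (\<Sum>j\<in>insert i J. A j)\<^sup>2) * (\<Prod>j\<in>insert i J. g j)"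
  proof (intro allI impI)
    fix r g A B
    assume H: "\<forall>j\<in>insert i J. 0 \<le> g j \<and> 0 \<le> A j \<and> 0 \<le> B j \<and> norm (f j r) \<le> g j \<and>
          norm (f1 j r) \<le> A j * g j \<and> norm (f2 j r) \<le> B j * g j"
    then have HJ: "\<forall>j\<in>J. 0 \<le> g j \<and> 0 \<le> A j \<and> 0 \<le> B j \<and> norm (f j r) \<le> g j \<and>
          norm (f1 j r) \<le> A j * g j \<and> norm (f2 j r) \<le> B j * g j" by auto
    note B' = mp[OF Bd[THEN spec[of _ r], THEN spec[of _ g], THEN spec[of _ A], THEN spec[of _ B]] HJ]
    have Hi: "0 \<le> g i" "0 \<le> A i" "0 \<le> B i" "norm (f i r) \<le> g i" "norm (f1 i r) \<le> A i * g i"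
      "norm (f2 i r) \<le> B i * g i" using H by auto
    have G0: "0 \<le> (\<Prod>j\<in>J. g j)" using HJ by (simp add: prod_nonneg)
    have S0: "0 \<le> (\<Sum>j\<in>J. A j)" "0 \<le> (\<Sum>j\<in>J. B j)" using HJ by (auto simp: sum_nonneg)
    have FB: "norm (F r) \<le> (\<Prod>j\<in>J. g j)" using B' by (simp add: F_def)
    have ps: "(\<Prod>j\<in>insert i J. g j) = g i * (\<Prod>j\<in>J. g j)" "(\<Sum>j\<in>insert i J. A j) = A i + (\<Sum>j\<in>J. A j)"
      "(\<Sum>j\<in>insert i J. B j) = B i + (\<Sum>j\<in>J. B j)" "(\<Prod>j\<in>insert i J. f j r) = f i r * F r"
      using insert.hyps by (auto simp: F_def)
    have c0: "norm (\<Prod>j\<in>insert i J. f j r) \<le> (\<Prod>j\<in>insert i J. g j)"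
      unfolding ps by (rule nm_le[OF Hi(4) FB])
    have c1: "norm (Q1 r) \<le> (\<Sum>j\<in>insert i J. A j) * (\<Prod>j\<in>insert i J. g j)"
      unfolding Q1_def ps by (rule comb1[OF Hi(1,2) G0 S0(1) Hi(4,5) FB]) (use B' in simp)
    have c2: "norm (Q2 r) \<le> ((\<Sum>j\<in>insert i J. B j) + (\<Sum>j\<in>insert i J. A j)\<^sup>2) * (\<Prod>j\<in>insert i J. g j)"
      unfolding Q2_def ps
      using comb2[OF Hi(1,2,3) G0 S0(1) S0(2) Hi(4,5,6) FB] B' by (simp add: add.assoc)
    show "norm (\<Prod>j\<in>insert i J. f j r) \<le> (\<Prod>j\<in>insert i J. g j) \<and>
        norm (Q1 r) \<le> (\<Sum>j\<in>insert i J. A j) * (\<Prod>j\<in>insert i J. g j) \<and>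
        norm (Q2 r) \<le> ((\<Sum>j\<in>insert i J. B j) + (\<Sum>j\<in>insert i J. A j)\<^sup>2) * (\<Prod>j\<in>insert i J. g j)"
      using c0 c1 c2 by blast
  qed
  show ?case using A1 A2 A3 by blast
qed

lemma cont_mat3:
  fixes f :: "'a::topological_space \<Rightarrow> real^'n^'m"
  assumes "\<And>i j. continuous_on S (\<lambda>x. f x $ i $ j)" shows "continuous_on S f"
proof -
  have e: "f = (\<lambda>x. \<chi> i. \<chi> j. f x $ i $ j)" by (simp add: vec_eq_iff)
  show ?thesis by (subst e) (intro continuous_on_vec_lambda assms)
qed

lemma cont_Ml: "continuous_on UNIV (\<lambda>\<theta>. Ml a \<theta>)"
proof -
  have "\<forall>i j::3. continuous_on UNIV (\<lambda>\<theta>. Ml a \<theta> $ i $ j)"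
    unfolding forall_3 Ml_def vector_3 by (intro conjI continuous_intros)
  then show ?thesis by (intro cont_mat3) auto
qed

lemma cont_Mr: "continuous_on UNIV (\<lambda>\<theta>. Mr a \<theta>)"
proof -
  have "\<forall>i j::3. continuous_on UNIV (\<lambda>\<theta>. Mr a \<theta> $ i $ j)"
    unfolding forall_3 Mr_def vector_3 by (intro conjI continuous_intros)
  then show ?thesis by (intro cont_mat3) auto
qed

lemma cont_mmult: "continuous_on UNIV (\<lambda>x::(real^3^3) \<times> (real^3^3). fst x ** snd x)"
  unfolding matrix_matrix_mult_def by (intro continuous_intros)

lemma meas_O:
  assumes "\<And>i. (\<lambda>x. \<Theta> x i) \<in> borel_measurable M"
  shows "(\<lambda>x. O_star t \<phi> (\<Theta> x) j) \<in> borel_measurable M"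
  using assms
proof (induction t arbitrary: \<phi> \<Theta> j)
  case Leaf then show ?case by simp
next
  case (Node l r)
  define nl where "nl = leaves l"
  define n where "n = leaves l + leaves r"
  show ?case
  proof (cases "j \<le> nl")
    case True
    have m1: "(\<lambda>x. Ml (\<phi> (n - 1)) (\<Theta> x (n - 1))) \<in> borel_measurable M"
      by (rule measurable_compose[OF Node.prems borel_measurable_continuous_onI[OF cont_Ml]])
    have m2: "(\<lambda>x. O_star l \<phi> (\<Theta> x) j) \<in> borel_measurable M" by (rule Node.IH(1)[OF Node.prems])
    have "(\<lambda>x. Ml (\<phi> (n - 1)) (\<Theta> x (n - 1)) ** O_star l \<phi> (\<Theta> x) j) \<in> borel_measurable M"
      by (rule borel_measurable_continuous_Pair[OF m1 m2 cont_mmult])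
    then show ?thesis using True by (simp add: Let_def nl_def n_def)
  next
    case False
    have m1: "(\<lambda>x. Mr (\<phi> (n - 1)) (\<Theta> x (n - 1))) \<in> borel_measurable M"
      by (rule measurable_compose[OF Node.prems borel_measurable_continuous_onI[OF cont_Mr]])
    have m2: "(\<lambda>x. O_star r (\<lambda>i. \<phi> (i + nl - 1)) (\<lambda>i. \<Theta> x (i + nl - 1)) (j - nl)) \<in> borel_measurable M"
      by (rule Node.IH(2)) (rule Node.prems)
    have "(\<lambda>x. Mr (\<phi> (n - 1)) (\<Theta> x (n - 1)) ** O_star r (\<lambda>i. \<phi> (i + nl - 1)) (\<lambda>i. \<Theta> x (i + nl - 1)) (j - nl)) \<in> borel_measurable M"
      by (rule borel_measurable_continuous_Pair[OF m1 m2 cont_mmult])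
    then show ?thesis using False by (simp add: Let_def nl_def n_def)
  qed
qed

lemma coord_meas: "(\<lambda>\<theta>. \<theta> i) \<in> borel_measurable (PiM I (\<lambda>_. unif_theta))"
proof (cases "i \<in> I")
  case True
  have "(\<lambda>\<theta>. \<theta> i) \<in> measurable (PiM I (\<lambda>_. unif_theta)) unif_theta"
    by (rule measurable_component_singleton[OF True])
  moreover have "sets unif_theta = sets borel" by (simp add: unif_theta_def)
  ultimately show ?thesis using measurable_cong_sets by blast
next
  case False
  have "(\<lambda>\<theta>. (undefined::real)) \<in> borel_measurable (PiM I (\<lambda>_. unif_theta))" by simp
  then show ?thesis
    by (rule measurable_cong[THEN iffD1, rotated]) (use False in \<open>auto simp: space_PiM PiE_def extensional_def\<close>)
qed

lemma char3_meas: assumes "prob_space \<mu>" "sets \<mu> = sets borel"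
  shows "char3 \<mu> \<in> borel_measurable borel"
proof -
  interpret prob_space \<mu> by fact
  have "(\<lambda>p::(real^3) \<times> (real^3). cis (fst p \<bullet> snd p)) \<in> borel_measurable (borel \<Otimes>\<^sub>M \<mu>)"
  proof (rule borel_measurable_continuous_Pair[where H="\<lambda>a b. cis (a \<bullet> b)"])
    show "fst \<in> borel_measurable (borel \<Otimes>\<^sub>M \<mu>)" by (rule measurable_fst)
    have "snd \<in> measurable (borel \<Otimes>\<^sub>M \<mu>) \<mu>" by (rule measurable_snd)
    then show "snd \<in> borel_measurable (borel \<Otimes>\<^sub>M \<mu>)" using measurable_cong_sets[OF refl assms(2)] by blast
    show "continuous_on UNIV (\<lambda>x. cis (fst x \<bullet> snd x))" by (intro continuous_intros)
  qed
  then have "(\<lambda>\<xi>. \<integral>v. cis (\<xi> \<bullet> v) \<partial>\<mu>) \<in> borel_measurable borel"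
    by (intro borel_measurable_lebesgue_integral) (simp add: case_prod_beta')
  then show ?thesis unfolding char3_def[abs_def] .
qed

locale cfl = cf \<mu> for \<mu> +
  fixes lam q :: real
  assumes lam_pos: "lam > 0" and q_nonneg: "q \<ge> 0"
    and lam_bd: "\<forall>\<xi>. norm (char3 \<mu> \<xi>) \<le> (lam\<^sup>2 / (lam\<^sup>2 + (norm \<xi>)\<^sup>2)) powr q"
begin

definition gam :: "real \<Rightarrow> real" where "gam c = (lam\<^sup>2 / (lam\<^sup>2 + c\<^sup>2)) powr q"
definition KK :: "real \<Rightarrow> real" where "KK c = m2 / gam c"
definition pp1 :: "real \<Rightarrow> real poly" where "pp1 c = [:1, KK c + 1, 1:]"
definition pp2 :: "real \<Rightarrow> real poly" where "pp2 c = [:KK c + 1, 1, (KK c)\<^sup>2 + 1, 1, 1:]"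
definition PsiF :: "(nat \<Rightarrow> real) \<Rightarrow> nat set \<Rightarrow> real \<Rightarrow> real" where
  "PsiF w J r = (\<Prod>j\<in>J. (lam\<^sup>2 / (lam\<^sup>2 + r\<^sup>2 * (w j)\<^sup>2)) powr q)"

lemma gam_pos: "gam c > 0" unfolding gam_def using lam_pos by simp
lemma KK_nonneg: "KK c \<ge> 0" unfolding KK_def using gam_pos[of c] m2_nonneg by (intro divide_nonneg_pos)

lemma base_le1: "0 \<le> x \<Longrightarrow> (lam\<^sup>2 / (lam\<^sup>2 + x)) powr q \<le> 1"
proof -
  assume x: "0 \<le> x"
  have l: "0 < lam\<^sup>2" using lam_pos by simp
  then have "0 < lam\<^sup>2 + x" using x by linarith
  then have le1: "lam\<^sup>2 / (lam\<^sup>2 + x) \<le> 1" using x by (simp add: divide_le_eq_1)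
  have b: "0 \<le> lam\<^sup>2 / (lam\<^sup>2 + x)" using x by simp
  show ?thesis by (rule powr_le1[OF q_nonneg]) (use b le1 in \<open>simp only: abs_of_nonneg\<close>)
qed

lemma char_le1: "norm (char3 \<mu> \<xi>) \<le> 1"
  using lam_bd base_le1[of "(norm \<xi>)\<^sup>2"] by (meson order_trans zero_le_power2)

lemma core:
  fixes a :: "nat \<Rightarrow> real^3" and w :: "nat \<Rightarrow> real" and J :: "nat set" and c :: real
  assumes J: "finite J" and aw: "\<And>j. j \<in> J \<Longrightarrow> norm (a j) = \<bar>w j\<bar>"
  shows "\<exists>P1 P2. (\<forall>r. ((\<lambda>s. \<Prod>j\<in>J. char3 \<mu> (s *\<^sub>R a j)) has_vector_derivative P1 r) (at r)) \<and>
    (\<forall>r. (P1 has_vector_derivative P2 r) (at r)) \<and>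
    (\<forall>r. norm (P1 r) \<le> (\<Sum>j\<in>J. \<bar>w j\<bar> * m1) \<and>
         norm (P2 r) \<le> (\<Sum>j\<in>J. (w j)\<^sup>2 * m2) + (\<Sum>j\<in>J. \<bar>w j\<bar> * m1)\<^sup>2) \<and>
    (\<forall>r. norm (\<Prod>j\<in>J. char3 \<mu> (r *\<^sub>R a j)) \<le> PsiF w J r) \<and>
    (\<forall>r. 0 \<le> r \<longrightarrow> (\<forall>j\<in>J. r * \<bar>w j\<bar> \<le> c) \<longrightarrow> (\<Sum>j\<in>J. (w j)\<^sup>2) \<le> 1 \<longrightarrow>
        norm (P1 r) \<le> poly (pp1 c) r * PsiF w J r \<and> norm (P2 r) \<le> poly (pp2 c) r * PsiF w J r)"
proof -
  define f where "f j s = integral\<^sup>L \<mu> (k0 (a j) s)" for j s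
  define f1 where "f1 j s = integral\<^sup>L \<mu> (k1 (a j) s)" for j s
  define f2 where "f2 j s = integral\<^sup>L \<mu> (k2 (a j) s)" for j s
  have feq: "char3 \<mu> (s *\<^sub>R a j) = f j s" for j s by (simp add: f_def char_eq)
  have "\<exists>P1 P2. (\<forall>r. ((\<lambda>s. \<Prod>j\<in>J. f j s) has_vector_derivative P1 r) (at r)) \<and>
     (\<forall>r. (P1 has_vector_derivative P2 r) (at r)) \<and>
     (\<forall>r g A B. (\<forall>j\<in>J. 0 \<le> g j \<and> 0 \<le> A j \<and> 0 \<le> B j \<and> norm (f j r) \<le> g j \<and>
          norm (f1 j r) \<le> A j * g j \<and> norm (f2 j r) \<le> B j * g j) \<longrightarrow>
        norm (\<Prod>j\<in>J. f j r) \<le> (\<Prod>j\<in>J. g j) \<and>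
        norm (P1 r) \<le> (\<Sum>j\<in>J. A j) * (\<Prod>j\<in>J. g j) \<and>
        norm (P2 r) \<le> ((\<Sum>j\<in>J. B j) + (\<Sum>j\<in>J. A j)\<^sup>2) * (\<Prod>j\<in>J. g j))"
    by (rule prod_deriv[OF J]) (auto simp: f_def[abs_def] f1_def[abs_def] f2_def c_deriv)
  then obtain P1 P2 where
    D1: "\<forall>r. ((\<lambda>s. \<Prod>j\<in>J. f j s) has_vector_derivative P1 r) (at r)" and
    D2: "\<forall>r. (P1 has_vector_derivative P2 r) (at r)" and
    Bd: "\<And>r g A B. (\<forall>j\<in>J. 0 \<le> g j \<and> 0 \<le> A j \<and> 0 \<le> B j \<and> norm (f j r) \<le> g j \<and>
          norm (f1 j r) \<le> A j * g j \<and> norm (f2 j r) \<le> B j * g j) \<Longrightarrow>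
        norm (\<Prod>j\<in>J. f j r) \<le> (\<Prod>j\<in>J. g j) \<and>
        norm (P1 r) \<le> (\<Sum>j\<in>J. A j) * (\<Prod>j\<in>J. g j) \<and>
        norm (P2 r) \<le> ((\<Sum>j\<in>J. B j) + (\<Sum>j\<in>J. A j)\<^sup>2) * (\<Prod>j\<in>J. g j)"
    by blast
  have f_le: "norm (f j r) \<le> (lam\<^sup>2 / (lam\<^sup>2 + r\<^sup>2 * (w j)\<^sup>2)) powr q" if "j \<in> J" for j r
  proof -
    have "norm (f j r) \<le> (lam\<^sup>2 / (lam\<^sup>2 + (norm (r *\<^sub>R a j))\<^sup>2)) powr q"
      using lam_bd feq by metis
    also have "(norm (r *\<^sub>R a j))\<^sup>2 = r\<^sup>2 * (w j)\<^sup>2"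
      using aw[OF that] by (simp add: power_mult_distrib)
    finally show ?thesis .
  qed
  have f_le1: "norm (f j r) \<le> 1" for j r using char_le1 feq by metis
  have f1_a: "norm (f1 j r) \<le> \<bar>w j\<bar> * m1" if "j \<in> J" for j r
    using c1_bd1[of "a j" r] aw[OF that] by (simp add: f1_def)
  have f1_b: "norm (f1 j r) \<le> \<bar>r\<bar> * (w j)\<^sup>2 * m2" if "j \<in> J" for j r
    using c1_bd2[of "a j" r] aw[OF that] by (simp add: f1_def)
  have f2_a: "norm (f2 j r) \<le> (w j)\<^sup>2 * m2" if "j \<in> J" for j r
    using c2_bd[of "a j" r] aw[OF that] by (simp add: f2_def)
  have U: "norm (P1 r) \<le> (\<Sum>j\<in>J. \<bar>w j\<bar> * m1) \<and>
         norm (P2 r) \<le> (\<Sum>j\<in>J. (w j)\<^sup>2 * m2) + (\<Sum>j\<in>J. \<bar>w j\<bar> * m1)\<^sup>2" for r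
    using Bd[of "\<lambda>_. 1" "\<lambda>j. \<bar>w j\<bar> * m1" "\<lambda>j. (w j)\<^sup>2 * m2" r]
    by (auto simp: f_le1 f1_a f2_a m1_nonneg m2_nonneg)
  have N: "norm (\<Prod>j\<in>J. char3 \<mu> (r *\<^sub>R a j)) \<le> PsiF w J r" for r
  proof -
    have "norm (\<Prod>j\<in>J. char3 \<mu> (r *\<^sub>R a j)) \<le> (\<Prod>j\<in>J. norm (char3 \<mu> (r *\<^sub>R a j)))"
      by (rule norm_prod_le)
    also have "\<dots> \<le> PsiF w J r" unfolding PsiF_def
      by (rule prod_mono) (use f_le feq in auto)
    finally show ?thesis .
  qed
  have C: "norm (P1 r) \<le> poly (pp1 c) r * PsiF w J r \<and> norm (P2 r) \<le> poly (pp2 c) r * PsiF w J r"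
    if r0: "0 \<le> r" and rc: "\<forall>j\<in>J. r * \<bar>w j\<bar> \<le> c" and sw: "(\<Sum>j\<in>J. (w j)\<^sup>2) \<le> 1" for r
  proof -
    define g where "g j = (lam\<^sup>2 / (lam\<^sup>2 + r\<^sup>2 * (w j)\<^sup>2)) powr q" for j
    define K where "K = KK c"
    have K0: "0 \<le> K" by (simp add: K_def KK_nonneg)
    have gp: "0 < gam c" by (rule gam_pos)
    have gge: "gam c \<le> g j" if "j \<in> J" for j
    proof -
      have "0 \<le> r * \<bar>w j\<bar>" using r0 by simp
      then have "(r * \<bar>w j\<bar>)\<^sup>2 \<le> c\<^sup>2" using rc that by (intro power_mono) auto
      then have sq: "r\<^sup>2 * (w j)\<^sup>2 \<le> c\<^sup>2" by (simp add: power_mult_distrib)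
      have "lam\<^sup>2 / (lam\<^sup>2 + c\<^sup>2) \<le> lam\<^sup>2 / (lam\<^sup>2 + r\<^sup>2 * (w j)\<^sup>2)"
      proof -
        have l: "0 < lam\<^sup>2" using lam_pos by simp
        have "0 < lam\<^sup>2 + c\<^sup>2" "0 < lam\<^sup>2 + r\<^sup>2 * (w j)\<^sup>2" using l by (simp_all add: add_pos_nonneg)
        then show ?thesis using l sq by (intro divide_left_mono) auto
      qed
      then show ?thesis unfolding gam_def g_def
        using lam_pos q_nonneg by (intro powr_mono2) auto
    qed
    have A: "norm (f1 j r) \<le> (r * (w j)\<^sup>2 * m2 / gam c) * g j" if "j \<in> J" for j
    proof -
      have "norm (f1 j r) \<le> r * (w j)\<^sup>2 * m2" using f1_b[OF that, of r] r0 by simp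
      also have "\<dots> = (r * (w j)\<^sup>2 * m2 / gam c) * gam c" using gp by simp
      also have "\<dots> \<le> (r * (w j)\<^sup>2 * m2 / gam c) * g j"
        using gge[OF that] gp r0 m2_nonneg by (intro mult_left_mono) auto
      finally show ?thesis .
    qed
    have B: "norm (f2 j r) \<le> ((w j)\<^sup>2 * m2 / gam c) * g j" if "j \<in> J" for j
    proof -
      have "norm (f2 j r) \<le> (w j)\<^sup>2 * m2" using f2_a[OF that] by simp
      also have "\<dots> = ((w j)\<^sup>2 * m2 / gam c) * gam c" using gp by simp
      also have "\<dots> \<le> ((w j)\<^sup>2 * m2 / gam c) * g j"
        using gge[OF that] gp m2_nonneg by (intro mult_left_mono) auto
      finally show ?thesis .
    qed
    have G: "0 \<le> g j" for j unfolding g_def by simp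
    note Bd' = Bd[of g "\<lambda>j. r * (w j)\<^sup>2 * m2 / gam c" "\<lambda>j. (w j)\<^sup>2 * m2 / gam c" r]
    have hyp: "\<forall>j\<in>J. 0 \<le> g j \<and> 0 \<le> r * (w j)\<^sup>2 * m2 / gam c \<and> 0 \<le> (w j)\<^sup>2 * m2 / gam c \<and>
        norm (f j r) \<le> g j \<and> norm (f1 j r) \<le> r * (w j)\<^sup>2 * m2 / gam c * g j \<and>
        norm (f2 j r) \<le> (w j)\<^sup>2 * m2 / gam c * g j"
      using G A B f_le gp r0 m2_nonneg unfolding g_def by auto
    have Ps: "(\<Prod>j\<in>J. g j) = PsiF w J r" by (simp add: PsiF_def g_def)
    have Ps0: "0 \<le> PsiF w J r" by (simp add: PsiF_def prod_nonneg)
    have SA: "(\<Sum>j\<in>J. r * (w j)\<^sup>2 * m2 / gam c) = r * K * (\<Sum>j\<in>J. (w j)\<^sup>2)"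
      by (simp add: K_def KK_def sum_distrib_left sum_divide_distrib algebra_simps)
    have SB: "(\<Sum>j\<in>J. (w j)\<^sup>2 * m2 / gam c) = K * (\<Sum>j\<in>J. (w j)\<^sup>2)"
      by (simp add: K_def KK_def sum_distrib_left sum_divide_distrib algebra_simps)
    have s0: "0 \<le> (\<Sum>j\<in>J. (w j)\<^sup>2)" by (simp add: sum_nonneg)
    have SA1: "r * K * (\<Sum>j\<in>J. (w j)\<^sup>2) \<le> r * K" using sw r0 K0 by (simp add: mult_left_le)
    have SA0: "0 \<le> r * K * (\<Sum>j\<in>J. (w j)\<^sup>2)" using r0 K0 s0 by simp
    have SB1: "K * (\<Sum>j\<in>J. (w j)\<^sup>2) \<le> K" using sw K0 by (simp add: mult_left_le)
    from Bd'[OF hyp] have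
      b1: "norm (P1 r) \<le> (r * K * (\<Sum>j\<in>J. (w j)\<^sup>2)) * PsiF w J r" and
      b2: "norm (P2 r) \<le> (K * (\<Sum>j\<in>J. (w j)\<^sup>2) + (r * K * (\<Sum>j\<in>J. (w j)\<^sup>2))\<^sup>2) * PsiF w J r"
      by (simp_all only: SA SB Ps)
    have p1: "r * K \<le> poly (pp1 c) r" using r0 K0
      by (simp add: pp1_def K_def algebra_simps)
    have p2: "K + (r * K)\<^sup>2 \<le> poly (pp2 c) r"
    proof -
      have "0 \<le> r * r * r" "0 \<le> r * r * r * r" "0 \<le> r * r" using r0 by simp_all
      then show ?thesis using r0 K0 by (simp add: pp2_def K_def algebra_simps power2_eq_square)
    qed
    have "norm (P1 r) \<le> poly (pp1 c) r * PsiF w J r"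
      using b1 SA1 p1 Ps0 by (meson mult_right_mono order_trans)
    moreover have "norm (P2 r) \<le> poly (pp2 c) r * PsiF w J r"
    proof -
      have "(r * K * (\<Sum>j\<in>J. (w j)\<^sup>2))\<^sup>2 \<le> (r * K)\<^sup>2" by (rule power_mono[OF SA1 SA0])
      then have "K * (\<Sum>j\<in>J. (w j)\<^sup>2) + (r * K * (\<Sum>j\<in>J. (w j)\<^sup>2))\<^sup>2 \<le> poly (pp2 c) r"
        using SB1 p2 by linarith
      then show ?thesis using b2 Ps0 by (meson mult_right_mono order_trans)
    qed
    ultimately show ?thesis ..
  qed
  show ?thesis
    apply (rule exI[of _ P1], rule exI[of _ P2])
    using D1 D2 U N C by (simp add: feq)
qed

end

lemma norm_orth: "orthogonal_matrix (A::real^'n^'n) \<Longrightarrow> norm (A *v x) = norm x"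
  by (rule orthogonal_transformation_norm)
     (simp add: orthogonal_transformation_matrix matrix_vector_mul_linear)

lemma to_bounds_at:
  assumes "\<forall>r. (F has_vector_derivative Q1 r) (at r)" "\<forall>r. (Q1 has_vector_derivative Q2 r) (at r)"
    "norm (F \<rho>) \<le> \<Psi> \<rho>" "norm (Q1 \<rho>) \<le> poly p1 \<rho> * \<Psi> \<rho>" "norm (Q2 \<rho>) \<le> poly p2 \<rho> * \<Psi> \<rho>"
  shows "bounds_at F \<Psi> p1 p2 \<rho>"
proof -
  have e1: "dr F = Q1" unfolding dr_def using assms(1) by (auto intro!: ext vector_derivative_at)
  have e2: "dr Q1 = Q2" unfolding dr_def using assms(2) by (auto intro!: ext vector_derivative_at)
  show ?thesis unfolding bounds_at_def e1 e2 using assms by auto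
qed

context cfl begin

lemma integral_part:
  fixes M :: "'t measure" and a :: "'t \<Rightarrow> nat \<Rightarrow> real^3" and w :: "nat \<Rightarrow> real" and J :: "nat set"
  assumes PM: "prob_space M" and J: "finite J" and aw: "\<And>\<theta> j. j \<in> J \<Longrightarrow> norm (a \<theta> j) = \<bar>w j\<bar>"
   and meas: "\<And>r. (\<lambda>\<theta>. \<Prod>j\<in>J. char3 \<mu> (r *\<^sub>R a \<theta> j)) \<in> borel_measurable M"
  shows "\<exists>Q1 Q2. (\<forall>r. ((\<lambda>s. \<integral>\<theta>. (\<Prod>j\<in>J. char3 \<mu> (s *\<^sub>R a \<theta> j)) \<partial>M) has_vector_derivative Q1 r) (at r)) \<and>
     (\<forall>r. (Q1 has_vector_derivative Q2 r) (at r)) \<and>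
     (\<forall>r. norm (\<integral>\<theta>. (\<Prod>j\<in>J. char3 \<mu> (r *\<^sub>R a \<theta> j)) \<partial>M) \<le> PsiF w J r) \<and>
     (\<forall>r. 0 \<le> r \<longrightarrow> (\<forall>j\<in>J. r * \<bar>w j\<bar> \<le> c) \<longrightarrow> (\<Sum>j\<in>J. (w j)\<^sup>2) \<le> 1 \<longrightarrow>
        norm (Q1 r) \<le> poly (pp1 c) r * PsiF w J r \<and> norm (Q2 r) \<le> poly (pp2 c) r * PsiF w J r)"
proof -
  interpret PM: prob_space M by (rule PM)
  define C1 where "C1 = (\<Sum>j\<in>J. \<bar>w j\<bar> * m1)"
  define C2 where "C2 = (\<Sum>j\<in>J. (w j)\<^sup>2 * m2) + (\<Sum>j\<in>J. \<bar>w j\<bar> * m1)\<^sup>2"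
  define N where "N r \<theta> = (\<Prod>j\<in>J. char3 \<mu> (r *\<^sub>R a \<theta> j))" for r \<theta>
  have "\<forall>\<theta>. \<exists>P1 P2. (\<forall>r. ((\<lambda>s. N s \<theta>) has_vector_derivative P1 r) (at r)) \<and>
    (\<forall>r. (P1 has_vector_derivative P2 r) (at r)) \<and>
    (\<forall>r. norm (P1 r) \<le> C1 \<and> norm (P2 r) \<le> C2) \<and>
    (\<forall>r. norm (N r \<theta>) \<le> PsiF w J r) \<and>
    (\<forall>r. 0 \<le> r \<longrightarrow> (\<forall>j\<in>J. r * \<bar>w j\<bar> \<le> c) \<longrightarrow> (\<Sum>j\<in>J. (w j)\<^sup>2) \<le> 1 \<longrightarrow>
        norm (P1 r) \<le> poly (pp1 c) r * PsiF w J r \<and> norm (P2 r) \<le> poly (pp2 c) r * PsiF w J r)"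
    unfolding N_def C1_def C2_def using core[OF J, of "a _" w c] aw by blast
  then obtain P1 P2 where
    D1: "\<And>\<theta> r. ((\<lambda>s. N s \<theta>) has_vector_derivative P1 \<theta> r) (at r)" and
    D2: "\<And>\<theta> r. (P1 \<theta> has_vector_derivative P2 \<theta> r) (at r)" and
    U: "\<And>\<theta> r. norm (P1 \<theta> r) \<le> C1 \<and> norm (P2 \<theta> r) \<le> C2" and
    NB: "\<And>\<theta> r. norm (N r \<theta>) \<le> PsiF w J r" and
    CB: "\<And>\<theta> r. 0 \<le> r \<Longrightarrow> (\<forall>j\<in>J. r * \<bar>w j\<bar> \<le> c) \<Longrightarrow> (\<Sum>j\<in>J. (w j)\<^sup>2) \<le> 1 \<Longrightarrow>
        norm (P1 \<theta> r) \<le> poly (pp1 c) r * PsiF w J r \<and> norm (P2 \<theta> r) \<le> poly (pp2 c) r * PsiF w J r"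
    by metis
  have Nm: "N r \<in> borel_measurable M" for r unfolding N_def[abs_def] using meas by simp
  have N1: "norm (N r \<theta>) \<le> 1" for r \<theta>
  proof -
    have "norm (N r \<theta>) \<le> (\<Prod>j\<in>J. norm (char3 \<mu> (r *\<^sub>R a \<theta> j)))" unfolding N_def by (rule norm_prod_le)
    also have "\<dots> \<le> 1" by (rule prod_le_1) (auto simp: char_le1)
    finally show ?thesis .
  qed
  have Ni: "integrable M (N r)" for r
    by (rule PM.integrable_const_bound[where B=1]) (auto simp: N1 Nm)
  have gi1: "integrable M (\<lambda>_. C1)" by simp
  have P1m: "(\<lambda>\<theta>. P1 \<theta> r) \<in> borel_measurable M" for r
    by (rule deriv_integral(1)[where M=M and f=N and f'="\<lambda>r \<theta>. P1 \<theta> r" and g="\<lambda>_. C1", OF Nm Ni D1 gi1]) (use U in auto)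
  have P1i: "integrable M (\<lambda>\<theta>. P1 \<theta> r)" for r
    by (rule deriv_integral(2)[where M=M and f=N and f'="\<lambda>r \<theta>. P1 \<theta> r" and g="\<lambda>_. C1", OF Nm Ni D1 gi1]) (use U in auto)
  have DI1: "((\<lambda>s. integral\<^sup>L M (N s)) has_vector_derivative integral\<^sup>L M (\<lambda>\<theta>. P1 \<theta> r)) (at r)" for r
    by (rule deriv_integral(3)[where M=M and f=N and f'="\<lambda>r \<theta>. P1 \<theta> r" and g="\<lambda>_. C1", OF Nm Ni D1 gi1]) (use U in auto)
  have DI2: "((\<lambda>s. integral\<^sup>L M (\<lambda>\<theta>. P1 \<theta> s)) has_vector_derivative integral\<^sup>L M (\<lambda>\<theta>. P2 \<theta> r)) (at r)" for r
    using deriv_integral(3)[where M=M and f="\<lambda>r \<theta>. P1 \<theta> r" and f'="\<lambda>r \<theta>. P2 \<theta> r" and g="\<lambda>_. C2", OF P1m P1i D2]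
      U by auto
  have bnd: "norm (integral\<^sup>L M h) \<le> B" if "integrable M h" "\<And>\<theta>. norm (h \<theta>) \<le> B" for h :: "'t \<Rightarrow> complex" and B
  proof -
    have "norm (integral\<^sup>L M h) \<le> integral\<^sup>L M (\<lambda>_. B)" by (rule int_norm_le) (auto simp: that)
    then show ?thesis by (simp add: PM.prob_space)
  qed
  define Q1 where "Q1 r = integral\<^sup>L M (\<lambda>\<theta>. P1 \<theta> r)" for r
  define Q2 where "Q2 r = integral\<^sup>L M (\<lambda>\<theta>. P2 \<theta> r)" for r
  have A1: "\<forall>r. ((\<lambda>s. \<integral>\<theta>. (\<Prod>j\<in>J. char3 \<mu> (s *\<^sub>R a \<theta> j)) \<partial>M) has_vector_derivative Q1 r) (at r)"
    using DI1 unfolding N_def Q1_def by blast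
  have A2: "\<forall>r. (Q1 has_vector_derivative Q2 r) (at r)"
    using DI2 unfolding Q1_def[abs_def] Q2_def by blast
  have A3: "\<forall>r. norm (\<integral>\<theta>. (\<Prod>j\<in>J. char3 \<mu> (r *\<^sub>R a \<theta> j)) \<partial>M) \<le> PsiF w J r"
    using bnd[OF Ni NB] unfolding N_def by blast
  have A4: "\<forall>r. 0 \<le> r \<longrightarrow> (\<forall>j\<in>J. r * \<bar>w j\<bar> \<le> c) \<longrightarrow> (\<Sum>j\<in>J. (w j)\<^sup>2) \<le> 1 \<longrightarrow>
        norm (Q1 r) \<le> poly (pp1 c) r * PsiF w J r \<and> norm (Q2 r) \<le> poly (pp2 c) r * PsiF w J r"
  proof (intro allI impI)
    fix r assume "0 \<le> r" "\<forall>j\<in>J. r * \<bar>w j\<bar> \<le> c" "(\<Sum>j\<in>J. (w j)\<^sup>2) \<le> 1"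
    note cb = CB[OF this]
    have q1: "norm (Q1 r) \<le> poly (pp1 c) r * PsiF w J r"
      unfolding Q1_def by (rule bnd) (use P1i cb in auto)
    have "integrable M (\<lambda>\<theta>. P2 \<theta> r)"
      using deriv_integral(2)[where M=M and f="\<lambda>r \<theta>. P1 \<theta> r" and f'="\<lambda>r \<theta>. P2 \<theta> r" and g="\<lambda>_. C2", OF P1m P1i D2]
        U by auto
    then have q2: "norm (Q2 r) \<le> poly (pp2 c) r * PsiF w J r"
      unfolding Q2_def by (rule bnd) (use cb in auto)
    show "norm (Q1 r) \<le> poly (pp1 c) r * PsiF w J r \<and> norm (Q2 r) \<le> poly (pp2 c) r * PsiF w J r"
      using q1 q2 ..
  qed
  show ?thesis using A1 A2 A3 A4 by blast
qed

end

lemma cont_G: "continuous_on UNIV (\<lambda>M::real^3^3. r *\<^sub>R (w *\<^sub>R (Bu *v (M *v e))))"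
  unfolding matrix_vector_mult_def by (intro continuous_intros)

lemma norm_e3: "norm e3 = 1" by (simp add: e3_def)

lemma sum_sq_le1:
  assumes "goodK (Kseq \<omega>)"
  shows "(\<Sum>j\<in>{1..nu \<omega>}. (pi_rv \<omega> j)\<^sup>2) \<le> 1"
proof (cases "nu \<omega> = 0")
  case True then show ?thesis by simp
next
  case False
  have "leaves (tree_nu \<omega>) = nu \<omega>"
    unfolding tree_nu_def by (rule leaves_tau) (use assms False in \<open>auto simp: goodK_def\<close>)
  then show ?thesis using pi_star_sq[of "tree_nu \<omega>" "phis \<omega>"] by (simp add: pi_rv_def)
qed

lemma rho_bound:
  fixes \<mu>0 :: "(real^3) measure"
  assumes m0: "0 \<le> moment4 \<mu>0" and rho: "0 \<le> \<rho>" "\<rho> \<le> R_rv \<mu>0 \<omega>" and j: "j \<in> {1..nu \<omega>}"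
  shows "\<rho> * \<bar>pi_rv \<omega> j\<bar> \<le> moment4 \<mu>0 powr (-1/4) / 2"
proof -
  define m where "m = moment4 \<mu>0"
  define W where "W = W_rv \<omega>"
  define x where "x = \<bar>pi_rv \<omega> j\<bar>"
  have W0: "0 \<le> W" unfolding W_def W_rv_def by (intro sum_nonneg) simp
  have c0: "0 \<le> m powr (-1/4) / 2" by simp
  show ?thesis
  proof (cases "m * W = 0")
    case True
    then have "R_rv \<mu>0 \<omega> = 0" by (simp add: R_rv_def m_def W_def)
    then show ?thesis using rho c0 m_def by simp
  next
    case False
    then have mp: "0 < m" and Wp: "0 < W" using m0 W0 unfolding m_def by (auto simp: less_le)
    have x4: "x ^ 4 \<le> W"
    proof -
      have "(pi_rv \<omega> j) ^ 4 \<le> W" unfolding W_def W_rv_def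
        by (rule member_le_sum) (use j in auto)
      then show ?thesis by (simp add: x_def power_even_abs)
    qed
    have W4: "(W powr (1/4)) ^ 4 = W" using Wp
      by (simp add: powr_realpow[symmetric] powr_powr)
    have xW: "x \<le> W powr (1/4)"
    proof (rule ccontr)
      assume "\<not> x \<le> W powr (1/4)"
      then have "W powr (1/4) < x" by simp
      then have "(W powr (1/4)) ^ 4 < x ^ 4" by (intro power_strict_mono) auto
      then show False using x4 W4 by simp
    qed
    have x0: "0 \<le> x" by (simp add: x_def)
    have "\<rho> * x \<le> R_rv \<mu>0 \<omega> * x" using rho x0 by (intro mult_right_mono) auto
    also have "\<dots> \<le> R_rv \<mu>0 \<omega> * W powr (1/4)"
      using xW by (intro mult_left_mono) (auto simp: R_rv_def)
    also have "R_rv \<mu>0 \<omega> = m powr (-1/4) * W powr (-1/4) / 2"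
      using mp Wp by (simp add: R_rv_def m_def W_def powr_mult)
    also have "m powr (-1/4) * W powr (-1/4) / 2 * W powr (1/4) = m powr (-1/4) * (W powr (-1/4) * W powr (1/4)) / 2"
      by simp
    also have "W powr (-1/4) * W powr (1/4) = 1" using Wp by (simp add: powr_add[symmetric])
    finally show ?thesis by (simp add: x_def m_def)
  qed
qed


lemma (in cfl) pointwise:
  assumes aB: "admissible_B B" and good: "goodK (Kseq \<omega>)" and m0: "0 \<le> moment4 \<mu>"
    and cdef: "c = moment4 \<mu> powr (-1/4) / 2" and rho: "\<rho> \<in> {0..R_rv \<mu> \<omega>}" and u: "u \<in> sphere 0 1"
  shows "bounds_at (\<lambda>r. Nhat \<mu> B \<omega> r u) (PsiF (pi_rv \<omega>) {1..nu \<omega>}) (pp1 c) (pp2 c) \<rho> \<and>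
         bounds_at (\<lambda>r. Mhat \<mu> B \<omega> r u) (PsiF (pi_rv \<omega>) {1..nu \<omega>}) (pp1 c) (pp2 c) \<rho>"
proof -
  define n where "n = nu \<omega>"
  define J where "J = {1..n}"
  define w where "w = pi_rv \<omega>"
  define t0 where "t0 = tree_nu \<omega>"
  define \<phi> where "\<phi> = phis \<omega>"
  have orthB: "orthogonal_matrix (B u)" and Be3: "B u *v e3 = u"
    using aB u by (auto simp: admissible_B_def)
  have npsi: "norm (B u *v (O_star t0 \<phi> \<theta> j *v e3)) = 1" for \<theta> j
    using norm_orth[OF orthB] norm_orth[OF orth_O] norm_e3 by simp
  have naw: "norm (w j *\<^sub>R (B u *v (O_star t0 \<phi> \<theta> j *v e3))) = \<bar>w j\<bar>" for \<theta> j
    using npsi by simp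
  have J: "finite J" by (simp add: J_def)
  have S1: "(\<Sum>j\<in>J. (w j)\<^sup>2) \<le> 1" using sum_sq_le1[OF good] by (simp add: J_def n_def w_def)
  have r0: "0 \<le> \<rho>" using rho by simp
  have S2: "\<forall>j\<in>J. \<rho> * \<bar>w j\<bar> \<le> c"
  proof
    fix j assume jJ: "j \<in> J"
    have "\<rho> * \<bar>pi_rv \<omega> j\<bar> \<le> moment4 \<mu> powr (-1/4) / 2"
      by (rule rho_bound[OF m0]) (use rho jJ in \<open>auto simp: J_def n_def\<close>)
    then show "\<rho> * \<bar>w j\<bar> \<le> c" by (simp only: cdef w_def)
  qed
  have Neq: "(\<lambda>r. Nhat \<mu> B \<omega> r u) = (\<lambda>r. \<Prod>j\<in>J. char3 \<mu> (r *\<^sub>R (w j *\<^sub>R (B u *v (O_star t0 \<phi> (thetas \<omega>) j *v e3)))))"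
    by (simp add: Nhat_def psi_rv_def J_def n_def w_def t0_def \<phi>_def fun_eq_iff)
  obtain P1 P2 where D1: "\<forall>r. ((\<lambda>s. \<Prod>j\<in>J. char3 \<mu> (s *\<^sub>R (w j *\<^sub>R (B u *v (O_star t0 \<phi> (thetas \<omega>) j *v e3))))) has_vector_derivative P1 r) (at r)"
    and D2: "\<forall>r. (P1 has_vector_derivative P2 r) (at r)"
    and NB: "\<forall>r. norm (\<Prod>j\<in>J. char3 \<mu> (r *\<^sub>R (w j *\<^sub>R (B u *v (O_star t0 \<phi> (thetas \<omega>) j *v e3))))) \<le> PsiF w J r"
    and CB: "\<forall>r. 0 \<le> r \<longrightarrow> (\<forall>j\<in>J. r * \<bar>w j\<bar> \<le> c) \<longrightarrow> (\<Sum>j\<in>J. (w j)\<^sup>2) \<le> 1 \<longrightarrow>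
        norm (P1 r) \<le> poly (pp1 c) r * PsiF w J r \<and> norm (P2 r) \<le> poly (pp2 c) r * PsiF w J r"
    using core[OF J, of "\<lambda>j. w j *\<^sub>R (B u *v (O_star t0 \<phi> (thetas \<omega>) j *v e3))" w c] naw by blast
  have BN: "bounds_at (\<lambda>r. Nhat \<mu> B \<omega> r u) (PsiF w J) (pp1 c) (pp2 c) \<rho>"
    unfolding Neq
    by (rule to_bounds_at[OF D1 D2]) (use NB mp[OF mp[OF mp[OF CB[THEN spec[of _ \<rho>]] r0] S2] S1] in auto)
  have BM: "bounds_at (\<lambda>r. Mhat \<mu> B \<omega> r u) (PsiF w J) (pp1 c) (pp2 c) \<rho>"
  proof (cases "n = 1")
    case True
    have t: "tree_nu \<omega> = Leaf" using True by (simp add: tree_nu_def n_def numeral_eq_Suc)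
    have "(\<lambda>r. Mhat \<mu> B \<omega> r u) = (\<lambda>r. Nhat \<mu> B \<omega> r u)"
      using True t Be3 by (simp add: Mhat_def Nhat_def psi_rv_def pi_rv_def n_def fun_eq_iff)
    then show ?thesis using BN by simp
  next
    case False
    define M where "M = PiM {1..n - 1} (\<lambda>_. unif_theta)"
    have PM: "prob_space M" unfolding M_def by (intro prob_space_PiM theta_prob)
    define a where "a \<theta> j = w j *\<^sub>R (B u *v (O_star t0 \<phi> \<theta> j *v e3))" for \<theta> j
    have Meq: "(\<lambda>r. Mhat \<mu> B \<omega> r u) = (\<lambda>r. \<integral>\<theta>. (\<Prod>j\<in>J. char3 \<mu> (r *\<^sub>R a \<theta> j)) \<partial>M)"
      using False by (simp add: Mhat_def M_def a_def J_def n_def w_def t0_def \<phi>_def fun_eq_iff)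
    have meas: "(\<lambda>\<theta>. \<Prod>j\<in>J. char3 \<mu> (r *\<^sub>R a \<theta> j)) \<in> borel_measurable M" for r
    proof (rule borel_measurable_prod)
      fix j
      have m1: "(\<lambda>\<theta>. O_star t0 \<phi> \<theta> j) \<in> borel_measurable M"
        unfolding M_def by (rule meas_O[where \<Theta>="\<lambda>\<theta>. \<theta>", OF coord_meas])
      have m2: "(\<lambda>\<theta>. r *\<^sub>R a \<theta> j) \<in> borel_measurable M"
        unfolding a_def by (rule measurable_compose[OF m1 borel_measurable_continuous_onI[OF cont_G]])
      show "(\<lambda>\<theta>. char3 \<mu> (r *\<^sub>R a \<theta> j)) \<in> borel_measurable M"
        by (rule measurable_compose[OF m2 char3_meas[OF prob sets]])
    qed
    obtain Q1 Q2 where E1: "\<forall>r. ((\<lambda>s. \<integral>\<theta>. (\<Prod>j\<in>J. char3 \<mu> (s *\<^sub>R a \<theta> j)) \<partial>M) has_vector_derivative Q1 r) (at r)"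
      and E2: "\<forall>r. (Q1 has_vector_derivative Q2 r) (at r)"
      and MB: "\<forall>r. norm (\<integral>\<theta>. (\<Prod>j\<in>J. char3 \<mu> (r *\<^sub>R a \<theta> j)) \<partial>M) \<le> PsiF w J r"
      and CB2: "\<forall>r. 0 \<le> r \<longrightarrow> (\<forall>j\<in>J. r * \<bar>w j\<bar> \<le> c) \<longrightarrow> (\<Sum>j\<in>J. (w j)\<^sup>2) \<le> 1 \<longrightarrow>
        norm (Q1 r) \<le> poly (pp1 c) r * PsiF w J r \<and> norm (Q2 r) \<le> poly (pp2 c) r * PsiF w J r"
      using integral_part[OF PM J, of a w, OF _ meas] naw unfolding a_def by blast
    show ?thesis unfolding Meq
      by (rule to_bounds_at[OF E1 E2]) (use MB mp[OF mp[OF mp[OF CB2[THEN spec[of _ \<rho>]] r0] S2] S1] in auto)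
  qed
  show ?thesis using BN BM by (simp add: J_def n_def w_def)
qed

theorem proposition2p5:
  fixes \<mu>0 :: "(real^3) measure" and p lam :: real and \<sigma> :: "3 \<Rightarrow> real"
  assumes prob: "prob_space \<mu>0" and sets: "sets \<mu>0 = sets borel"
    and m4: "integrable \<mu>0 (\<lambda>v. norm v ^ 4)"
    and p_pos: "p > 0"
    and decay: "(\<lambda>\<xi>. norm (char3 \<mu>0 \<xi>)) \<in> o[at_infinity](\<lambda>\<xi>. norm \<xi> powr (- p))"
    and mean: "\<forall>i. integral\<^sup>L \<mu>0 (\<lambda>v. v $ i) = 0"
    and cov: "\<forall>i j. integral\<^sup>L \<mu>0 (\<lambda>v. v $ i * v $ j) = (if i = j then (\<sigma> i)\<^sup>2 else 0)"
    and sig: "(\<sigma> 1)\<^sup>2 + (\<sigma> 2)\<^sup>2 + (\<sigma> 3)\<^sup>2 = 3"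
    and lam_pos: "lam > 0"
    and lam_bd: "\<forall>\<xi>. norm (char3 \<mu>0 \<xi>) \<le>
                   (lam\<^sup>2 / (lam\<^sup>2 + (norm \<xi>)\<^sup>2)) powr (1 / (2 * real_of_int \<lceil>2 / p\<rceil>))"
  shows "\<exists>p1 p2 :: real poly.
     degree p1 = 2 \<and> degree p2 = 4 \<and> (\<forall>i\<le>2. coeff p1 i > 0) \<and> (\<forall>i\<le>4. coeff p2 i > 0) \<and>
     (\<forall>b t B. kernel_b b \<longrightarrow> t \<ge> 0 \<longrightarrow> admissible_B B \<longrightarrow>
        (AE \<omega> in Pt b t. \<forall>\<rho>\<in>{0..R_rv \<mu>0 \<omega>}. \<forall>u\<in>sphere 0 1.
           bounds_at (\<lambda>r. Nhat \<mu>0 B \<omega> r u)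
             (Psi lam (1 / (2 * real_of_int \<lceil>2 / p\<rceil>)) \<omega>) p1 p2 \<rho> \<and>
           bounds_at (\<lambda>r. Mhat \<mu>0 B \<omega> r u)
             (Psi lam (1 / (2 * real_of_int \<lceil>2 / p\<rceil>)) \<omega>) p1 p2 \<rho>))"
proof -
  define q where "q = 1 / (2 * real_of_int \<lceil>2 / p\<rceil>)"
  have "0 < 2 / p" using p_pos by simp
  then have cp: "0 < \<lceil>2 / p\<rceil>" by simp
  have "0 < real_of_int \<lceil>2 / p\<rceil>" using cp by linarith
  then have q0: "0 \<le> q" unfolding q_def by (intro divide_nonneg_pos) auto
  interpret C: cfl \<mu>0 lam q
    by (intro cfl.intro cf.intro cfl_axioms.intro prob sets m4 mean lam_pos q0) (use lam_bd in \<open>simp add: q_def\<close>)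
  define c where "c = moment4 \<mu>0 powr (-1/4) / 2"
  have m0: "0 \<le> moment4 \<mu>0" unfolding moment4_def by simp
  have K0: "0 \<le> C.KK c" by (rule C.KK_nonneg)
  have deg1: "degree (C.pp1 c) = 2" by (simp add: C.pp1_def)
  have deg2: "degree (C.pp2 c) = 4" by (simp add: C.pp2_def)
  have co1: "\<forall>i\<le>2. coeff (C.pp1 c) i > 0"
  proof (intro allI impI)
    fix i :: nat assume "i \<le> 2"
    then have "i = 0 \<or> i = 1 \<or> i = 2" by auto
    then show "coeff (C.pp1 c) i > 0" using K0 by (auto simp: C.pp1_def numeral_eq_Suc)
  qed
  have co2: "\<forall>i\<le>4. coeff (C.pp2 c) i > 0"
  proof (intro allI impI)
    fix i :: nat assume "i \<le> 4"
    then have "i = 0 \<or> i = 1 \<or> i = 2 \<or> i = 3 \<or> i = 4" by auto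
    moreover have kk: "0 < C.KK c * C.KK c + 1" using K0 by (smt (verit) mult_nonneg_nonneg)
    ultimately show "coeff (C.pp2 c) i > 0" using K0 kk
      by (auto simp: C.pp2_def numeral_eq_Suc add_pos_nonneg intro: add_nonneg_pos)
  qed
  have PsiEq: "Psi lam (1 / (2 * real_of_int \<lceil>2 / p\<rceil>)) \<omega> = C.PsiF (pi_rv \<omega>) {1..nu \<omega>}" for \<omega>
    by (rule ext, unfold C.PsiF_def, unfold Psi_def q_def, rule refl)
  have main: "\<forall>b t B. kernel_b b \<longrightarrow> t \<ge> 0 \<longrightarrow> admissible_B B \<longrightarrow>
        (AE \<omega> in Pt b t. \<forall>\<rho>\<in>{0..R_rv \<mu>0 \<omega>}. \<forall>u\<in>sphere 0 1.
           bounds_at (\<lambda>r. Nhat \<mu>0 B \<omega> r u)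
             (Psi lam (1 / (2 * real_of_int \<lceil>2 / p\<rceil>)) \<omega>) (C.pp1 c) (C.pp2 c) \<rho> \<and>
           bounds_at (\<lambda>r. Mhat \<mu>0 B \<omega> r u)
             (Psi lam (1 / (2 * real_of_int \<lceil>2 / p\<rceil>)) \<omega>) (C.pp1 c) (C.pp2 c) \<rho>)"
  proof (intro allI impI)
    fix b :: "real \<Rightarrow> real" and t :: real and B :: "real^3 \<Rightarrow> real^3^3"
    assume kb: "kernel_b b" and "t \<ge> 0" and aB: "admissible_B B"
    show "AE \<omega> in Pt b t. \<forall>\<rho>\<in>{0..R_rv \<mu>0 \<omega>}. \<forall>u\<in>sphere 0 1.
           bounds_at (\<lambda>r. Nhat \<mu>0 B \<omega> r u)
             (Psi lam (1 / (2 * real_of_int \<lceil>2 / p\<rceil>)) \<omega>) (C.pp1 c) (C.pp2 c) \<rho> \<and>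
           bounds_at (\<lambda>r. Mhat \<mu>0 B \<omega> r u)
             (Psi lam (1 / (2 * real_of_int \<lceil>2 / p\<rceil>)) \<omega>) (C.pp1 c) (C.pp2 c) \<rho>"
      using AE_goodK_Pt[OF kb, of t]
    proof (rule AE_mp, intro AE_I2 impI ballI)
      fix \<omega> \<rho> u assume good: "goodK (Kseq \<omega>)" and rho: "\<rho> \<in> {0..R_rv \<mu>0 \<omega>}" and u: "u \<in> sphere (0::real^3) 1"
      show "bounds_at (\<lambda>r. Nhat \<mu>0 B \<omega> r u)
             (Psi lam (1 / (2 * real_of_int \<lceil>2 / p\<rceil>)) \<omega>) (C.pp1 c) (C.pp2 c) \<rho> \<and>
           bounds_at (\<lambda>r. Mhat \<mu>0 B \<omega> r u)
             (Psi lam (1 / (2 * real_of_int \<lceil>2 / p\<rceil>)) \<omega>) (C.pp1 c) (C.pp2 c) \<rho>"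
        unfolding PsiEq by (rule C.pointwise[OF aB good m0 c_def rho u])
    qed
  qed
  show ?thesis using deg1 deg2 co1 co2 main by blast
qed

end
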